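(* Let $a,d\in\mathbb N$, $\mu\in\mathbb R$, $\delta=\mu\sigma_d$. Let $\chi,\chi'$ be dominant weights with $\chi+\rho+\delta,\ \chi'+\rho+\delta\in\mathbf V^a(1,d)$, let $e=e(\chi)$, $e'=e(\chi')$, and let $I$ be a sub-multiset of $\mathcal W^a_{e'}$. Assume $\chi'-\sigma_I+\rho$ has pairwise distinct coordinates, and let $(\chi'-\sigma_I)^+$ be the dominant weight with $(\chi'-\sigma_I)^++\rho=w(\chi'-\sigma_I+\rho)$ for some $w\in\mathfrak S_d$; then $(\chi'-\sigma_I)^++\rho+\delta\in\mathbf V^a(1,d)$, and let $e''=e((\chi'-\sigma_I)^+)$. Suppose that either (i) $p(\chi')>p(\chi)$; or (ii) $p(\chi')=p(\chi)$ and $e'<e$; or (iii) $p(\chi')=p(\chi)$, $e'=e$ and $I\ne\emptyset$. Then \[ p_e((\chi'-\sigma_I)^+)\ge p((\chi'-\sigma_I)^+)\ge p(\chi). \] Moreover, if the second inequality is an equality then $p(\chi')=p(\chi)$ and $e''\le e'$, with $e''<e'$ if $I\neq\emptyset$; hence then $e''<e$ and the first inequality is strict. In particular, in each of the cases (i)–(iii), \[ \sum_{i\le e}\big((\chi'-\sigma_I)^+\big)_i>\sum_{i\le e}\chi_i, \] where $\psi_i$ denotes the coefficient of $\beta_i$ in $\psi$.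
   Context: $M(d)$: character lattice of the diagonal torus of $GL(d)$ with coordinate characters $\beta_1,\dots,\beta_d$; $\sum c_i\beta_i$ dominant if $c_1\le\dots\le c_d$; $\rho=\frac12\sum_{j<i}(\beta_i-\beta_j)$; $\sigma_d=\sum\beta_i$; $\mathbf V^a(1,d)=\frac32\mathrm{sum}[0,\beta_i-\beta_j]+\frac a2\mathrm{sum}[-\beta_k,\beta_k]+\mathrm{sum}[-\beta_k,0]$ (Minkowski sums over all $i,j,k$). For $0\le e\le d$, $\mathcal W^a_e$ is the multiset $\{(\beta_i-\beta_j)^{\times3},(-\beta_j)^{\times a}: j\le e<i\}$ (the weights of $V^{\oplus a}\oplus(V^\vee)^{\oplus a}\oplus\mathfrak{gl}(V)^{\oplus3}$ on which the cocharacter $(t,\dots,t,1,\dots,1)$, $e$ entries $t$, acts negatively); $\sigma_I=\sum_{\beta\in I}\beta$. For dominant $\psi$ with $\psi+\rho+\delta\in\mathbf V^a(1,d)$, $e(\psi)$ is the unique $0\le e\le d$ with $\psi+\rho+\delta=\sum_{j<i\le e}c_{ij}(\beta_i-\beta_j)+\sum_{e<j<i}c_{ij}(\beta_i-\beta_j)+\sum_{j\le e<i}\frac32(\beta_i-\beta_j)+\sum_ic_i\beta_i$, $0\le c_{ij}\le\frac32$, $-\frac{a+2}2\le c_i\le-\frac a2$ ($i\le e$), $-\frac a2<c_i\le\frac a2$ ($i>e$). For a weight $\psi$, with $\psi+\rho+\delta=\sum b_i\beta_i$, $p_l(\psi):=\sum_{i\le l}b_i+\frac32l(d-l)+\frac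 a2l$, and $p(\psi):=p_{e(\psi)}(\psi)$. *)

theory Defs
  imports Complex_Main "HOL-Library.Multiset"
begin

text \<open>Weights of the diagonal torus of GL(d) (tensored with the reals) are represented
  as functions nat \<Rightarrow> real; only the coordinates 1..d (coefficients of
  beta_1..beta_d) are meaningful.\<close>

definition beta :: "nat \<Rightarrow> nat \<Rightarrow> real" where
  "beta i = (\<lambda>m. if m = i then 1 else 0)"

definition rho :: "nat \<Rightarrow> nat \<Rightarrow> real" where
  "rho d = (\<lambda>m. (1/2) * (\<Sum>i\<in>{1..d}. \<Sum>j\<in>{1..d}.
              if j < i then beta i m - beta j m else 0))"

text \<open>delta = mu * sigma_d\<close>
definition delta :: "real \<Rightarrow> nat \<Rightarrow> real" where
  "delta mu = (\<lambda>m. mu)"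

definition dominant :: "nat \<Rightarrow> (nat \<Rightarrow> real) \<Rightarrow> bool" where
  "dominant d c \<longleftrightarrow> (\<forall>i j. 1 \<le> i \<longrightarrow> i \<le> j \<longrightarrow> j \<le> d \<longrightarrow> c i \<le> c j)"

definition dominant_weight :: "nat \<Rightarrow> (nat \<Rightarrow> real) \<Rightarrow> bool" where
  "dominant_weight d c \<longleftrightarrow> (\<forall>i\<in>{1..d}. c i \<in> \<int>) \<and> dominant d c"

text \<open>The zonotope V^a(1,d) = 3/2 sum[0,beta_i-beta_j] + a/2 sum[-beta_k,beta_k] + sum[-beta_k,0]
  (Minkowski sums of segments over all i, j, k in 1..d).\<close>
definition Vzon :: "nat \<Rightarrow> nat \<Rightarrow> (nat \<Rightarrow> real) set" where
  "Vzon a d = {x. \<exists>t u v.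
      (\<forall>i j. 0 \<le> t i j \<and> t i j \<le> 1) \<and>
      (\<forall>k. -1 \<le> u k \<and> u k \<le> 1) \<and>
      (\<forall>k. 0 \<le> v k \<and> v k \<le> 1) \<and>
      (\<forall>m\<in>{1..d}. x m =
          (\<Sum>i\<in>{1..d}. \<Sum>j\<in>{1..d}. t i j * ((3/2) * (beta i m - beta j m)))
        + (\<Sum>k\<in>{1..d}. u k * ((real a / 2) * beta k m))
        + (\<Sum>k\<in>{1..d}. v k * (- beta k m)))}"

definition shifted :: "nat \<Rightarrow> real \<Rightarrow> (nat \<Rightarrow> real) \<Rightarrow> nat \<Rightarrow> real" where
  "shifted d mu psi = (\<lambda>m. psi m + rho d m + delta mu m)"

definition e_decomp :: "nat \<Rightarrow> nat \<Rightarrow> (nat \<Rightarrow> real) \<Rightarrow> nat \<Rightarrow> bool" where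
  "e_decomp a d x e \<longleftrightarrow> (\<exists>c cc.
      (\<forall>i j. 0 \<le> c i j \<and> c i j \<le> 3/2) \<and>
      (\<forall>i. 1 \<le> i \<longrightarrow> i \<le> e \<longrightarrow> -(real a + 2)/2 \<le> cc i \<and> cc i \<le> - real a / 2) \<and>
      (\<forall>i. e < i \<longrightarrow> i \<le> d \<longrightarrow> - real a / 2 < cc i \<and> cc i \<le> real a / 2) \<and>
      (\<forall>m\<in>{1..d}. x m =
          (\<Sum>i\<in>{1..d}. \<Sum>j\<in>{1..d}.
              if j < i \<and> i \<le> e then c i j * (beta i m - beta j m) else 0)
        + (\<Sum>i\<in>{1..d}. \<Sum>j\<in>{1..d}.
              if e < j \<and> j < i then c i j * (beta i m - beta j m) else 0)
        + (\<Sum>i\<in>{1..d}. \<Sum>j\<in>{1..d}.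
              if j \<le> e \<and> e < i then (3/2) * (beta i m - beta j m) else 0)
        + (\<Sum>i\<in>{1..d}. cc i * beta i m)))"

definition e_of :: "nat \<Rightarrow> nat \<Rightarrow> real \<Rightarrow> (nat \<Rightarrow> real) \<Rightarrow> nat" where
  "e_of a d mu psi = (THE e. e \<le> d \<and> e_decomp a d (shifted d mu psi) e)"

definition p_l :: "nat \<Rightarrow> nat \<Rightarrow> real \<Rightarrow> nat \<Rightarrow> (nat \<Rightarrow> real) \<Rightarrow> real" where
  "p_l a d mu l psi = (\<Sum>i\<in>{1..l}. shifted d mu psi i)
      + (3/2) * real l * (real d - real l) + (real a / 2) * real l"

definition p_of :: "nat \<Rightarrow> nat \<Rightarrow> real \<Rightarrow> (nat \<Rightarrow> real) \<Rightarrow> real" where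
  "p_of a d mu psi = p_l a d mu (e_of a d mu psi) psi"

definition W_ms :: "nat \<Rightarrow> nat \<Rightarrow> nat \<Rightarrow> (nat \<Rightarrow> real) multiset" where
  "W_ms a d e =
     (\<Sum>j\<in>{1..e}. \<Sum>i\<in>{e+1..d}. replicate_mset 3 (\<lambda>m. beta i m - beta j m))
   + (\<Sum>j\<in>{1..e}. replicate_mset a (\<lambda>m. - beta j m))"

definition sigma_ms :: "(nat \<Rightarrow> real) multiset \<Rightarrow> nat \<Rightarrow> real" where
  "sigma_ms I = (\<lambda>m. sum_mset (image_mset (\<lambda>b. b m) I))"

end

theory Submission
  imports Defs
begin


lemma beta_simp: "beta i m = (if m = i then 1 else 0)"
  by (simp add: beta_def)

lemma net_expand:
  assumes "finite D" "m \<in> D"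
  shows "(\<Sum>i\<in>D. \<Sum>j\<in>D. K i j * (beta i m - beta j m)) = (\<Sum>j\<in>D. K m j) - (\<Sum>i\<in>D. K i m)"
proof -
  have "(\<Sum>i\<in>D. \<Sum>j\<in>D. K i j * (beta i m - beta j m))
      = (\<Sum>i\<in>D. \<Sum>j\<in>D. K i j * beta i m) - (\<Sum>i\<in>D. \<Sum>j\<in>D. K i j * beta j m)"
    by (simp add: right_diff_distrib sum_subtractf)
  also have "(\<Sum>i\<in>D. \<Sum>j\<in>D. K i j * beta i m) = (\<Sum>j\<in>D. K m j)"
  proof -
    have "(\<Sum>i\<in>D. \<Sum>j\<in>D. K i j * beta i m) = (\<Sum>i\<in>D. if m = i then (\<Sum>j\<in>D. K i j) else 0)"
      by (rule sum.cong) (auto simp: beta_simp)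
    also have "\<dots> = (\<Sum>j\<in>D. K m j)" using assms by (simp add: sum.delta)
    finally show ?thesis .
  qed
  also have "(\<Sum>i\<in>D. \<Sum>j\<in>D. K i j * beta j m) = (\<Sum>i\<in>D. K i m)"
  proof (rule sum.cong)
    fix i assume "i \<in> D"
    have "(\<Sum>j\<in>D. K i j * beta j m) = (\<Sum>j\<in>D. if j = m then K i j else 0)"
      by (rule sum.cong) (auto simp: beta_simp)
    also have "\<dots> = K i m" using assms by (simp add: sum.delta)
    finally show "(\<Sum>j\<in>D. K i j * beta j m) = K i m" .
  qed simp
  finally show ?thesis .
qed

definition netf :: "nat set \<Rightarrow> (nat \<Rightarrow> nat \<Rightarrow> real) \<Rightarrow> nat \<Rightarrow> real" where
  "netf D C m = (\<Sum>j\<in>D. C m j) - (\<Sum>i\<in>D. C i m)"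

lemma netf_subset_sum:
  assumes "finite D" "S \<subseteq> D"
  shows "(\<Sum>m\<in>S. netf D C m) = (\<Sum>m\<in>S. \<Sum>j\<in>D-S. C m j) - (\<Sum>m\<in>S. \<Sum>i\<in>D-S. C i m)"
proof -
  have fS: "finite S" using assms finite_subset by blast
  have D: "D = S \<union> (D - S)" using assms by blast
  have s1: "\<And>f. (\<Sum>j\<in>D. f j) = (\<Sum>j\<in>S. f j) + (\<Sum>j\<in>D-S. f j)"
    using assms fS by (metis D Diff_disjoint finite_Diff sum.union_disjoint)
  have "(\<Sum>m\<in>S. netf D C m) = (\<Sum>m\<in>S. \<Sum>j\<in>S. C m j) + (\<Sum>m\<in>S. \<Sum>j\<in>D-S. C m j)
        - ((\<Sum>m\<in>S. \<Sum>i\<in>S. C i m) + (\<Sum>m\<in>S. \<Sum>i\<in>D-S. C i m))"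
    by (simp add: netf_def s1 sum.distrib sum_subtractf)
  moreover have "(\<Sum>m\<in>S. \<Sum>j\<in>S. C m j) = (\<Sum>m\<in>S. \<Sum>i\<in>S. C i m)"
    by (rule sum.swap)
  ultimately show ?thesis by simp
qed

lemma interp_convex:
  fixes A :: "nat \<Rightarrow> real" and k c m q :: nat and lam :: real
  assumes "c \<le> m" "m \<le> q"
    and "A c \<ge> -(3/2) * real c * (real k - real c)"
    and "A q \<ge> -(3/2) * real q * (real k - real q)"
    and "A m = A c + (real m - real c) * lam"
    and "A q = A c + (real q - real c) * lam"
  shows "A m \<ge> -(3/2) * real m * (real k - real m)"
proof (cases "c = q")
  case True then show ?thesis using assms by (metis le_antisym)
next
  case False
  hence cq: "real c < real q" using assms by simp
  have id: "(real q - real c) * A m = (real q - real m) * A c + (real m - real c) * A q"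
    unfolding assms(5) assms(6) by (simp add: algebra_simps)
  have cv: "(real q - real m) * (-(3/2) * real c * (real k - real c)) + (real m - real c) * (-(3/2) * real q * (real k - real q))
      - (real q - real c) * (-(3/2) * real m * (real k - real m)) = (3/2) * (real q - real m) * (real m - real c) * (real q - real c)"
    by (simp add: field_simps)
  have p1: "(real q - real m) * A c \<ge> (real q - real m) * (-(3/2) * real c * (real k - real c))"
    using assms by (intro mult_left_mono) auto
  have p2: "(real m - real c) * A q \<ge> (real m - real c) * (-(3/2) * real q * (real k - real q))"
    using assms by (intro mult_left_mono) auto
  have p3: "(3/2) * (real q - real m) * (real m - real c) * (real q - real c) \<ge> 0"
    using assms by simp
  have "(real q - real c) * A m \<ge> (real q - real c) * (-(3/2) * real m * (real k - real m))"
    using id cv p1 p2 p3 by linarith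
  moreover have "real q - real c > 0" using cq by simp
  ultimately show ?thesis by (rule mult_left_le_imp_le)
qed



lemma sum_split_ivl:
  fixes f :: "nat \<Rightarrow> real"
  assumes "m \<le> k"
  shows "(\<Sum>i\<in>{b<..b+k}. f i) = (\<Sum>i\<in>{b<..b+m}. f i) + (\<Sum>i\<in>{b+m<..b+k}. f i)"
proof -
  have "{b<..b+k} = {b<..b+m} \<union> {b+m<..b+k}" using assms by auto
  moreover have "{b<..b+m} \<inter> {b+m<..b+k} = {}" by auto
  ultimately show ?thesis by (simp add: sum.union_disjoint)
qed

lemma sum_ivl_Suc:
  fixes f :: "nat \<Rightarrow> real"
  shows "(\<Sum>i\<in>{b<..b+Suc m}. f i) = (\<Sum>i\<in>{b<..b+m}. f i) + f (Suc (b+m))"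
proof -
  have "{b<..b+Suc m} = insert (Suc (b+m)) {b<..b+m}" by auto
  thus ?thesis by simp
qed

lemma region_prefix:
  fixes A val :: "nat \<Rightarrow> real" and k :: nat and Lw Up :: "nat \<Rightarrow> bool" and lam :: real
  assumes Astep: "\<And>m. A (Suc m) = A m + val (Suc m)"
    and lw: "\<And>m. m \<le> k \<Longrightarrow> Lw m \<Longrightarrow> A m \<ge> -(3/2) * real m * (real k - real m)"
    and up: "\<And>m. m \<le> k \<Longrightarrow> Up m \<Longrightarrow> A m \<ge> -(3/2) * real m * (real k - real m)"
    and Lw0: "Lw 0" and Upk: "Up k"
    and mid: "\<And>j. 1 \<le> j \<Longrightarrow> j \<le> k \<Longrightarrow> \<not> Lw j \<Longrightarrow> \<not> Up (j-1) \<Longrightarrow> val j = lam"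
    and lwdown: "\<And>i j. i \<le> j \<Longrightarrow> j \<le> k \<Longrightarrow> Lw j \<Longrightarrow> Lw i"
    and upup: "\<And>i j. i \<le> j \<Longrightarrow> j \<le> k \<Longrightarrow> Up i \<Longrightarrow> Up j"
    and mk: "m \<le> k"
  shows "A m \<ge> -(3/2) * real m * (real k - real m)"
proof (cases "Lw m \<or> Up m")
  case True thus ?thesis using lw up mk by blast
next
  case False
  hence nL: "\<not> Lw m" and nU: "\<not> Up m" by auto
  define CS where "CS = {c. c \<le> m \<and> Lw c}"
  define QS where "QS = {q. m \<le> q \<and> q \<le> k \<and> Up q}"
  have fCS: "finite CS" "CS \<noteq> {}" unfolding CS_def using Lw0 by auto
  have fQS: "finite QS" "QS \<noteq> {}" unfolding QS_def using Upk mk by auto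
  define c where "c = Max CS"
  define q where "q = Min QS"
  have cin: "c \<in> CS" unfolding c_def using fCS by simp
  have qin: "q \<in> QS" unfolding q_def using fQS by simp
  have cm: "c \<le> m" and Lc: "Lw c" using cin CS_def by auto
  have mq: "m \<le> q" and qk: "q \<le> k" and Uq: "Up q" using qin QS_def by auto
  have cmax: "\<And>j. j \<le> m \<Longrightarrow> Lw j \<Longrightarrow> j \<le> c" unfolding c_def using fCS CS_def by auto
  have qmin: "\<And>j. m \<le> j \<Longrightarrow> j \<le> k \<Longrightarrow> Up j \<Longrightarrow> q \<le> j" unfolding q_def using fQS QS_def by auto
  have valj: "val j = lam" if "c < j" "j \<le> q" for j
  proof -
    have "\<not> Lw j"
    proof
      assume "Lw j"
      show False
      proof (cases "j \<le> m")
        case True thus False using cmax[OF True \<open>Lw j\<close>] that by simp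
      next
        case False thus False using lwdown[of m j] \<open>Lw j\<close> nL that qk by simp
      qed
    qed
    moreover have "\<not> Up (j-1)"
    proof
      assume U: "Up (j-1)"
      show False
      proof (cases "m \<le> j - 1")
        case True
        have "j - 1 \<le> k" using that qk by simp
        from qmin[OF True this U] that show False by linarith
      next
        case False thus False using upup[of "j-1" m] U nU mk by simp
      qed
    qed
    ultimately show ?thesis using mid[of j] that qk by simp
  qed
  have lin: "\<And>t. c + t \<le> q \<Longrightarrow> A (c + t) = A c + real t * lam"
  proof -
    fix t show "c + t \<le> q \<Longrightarrow> A (c + t) = A c + real t * lam"
    proof (induction t)
      case 0 thus ?case by simp
    next
      case (Suc t)
      have "A (c + Suc t) = A (c + t) + val (Suc (c + t))" using Astep by simp
      also have "val (Suc (c+t)) = lam" using valj Suc.prems by simp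
      finally show ?case using Suc by (simp add: algebra_simps)
    qed
  qed
  have Am: "A m = A c + (real m - real c) * lam"
    using lin[of "m - c"] cm mq by (simp add: of_nat_diff)
  have Aq: "A q = A c + (real q - real c) * lam"
    using lin[of "q - c"] cm mq by (simp add: of_nat_diff)
  show ?thesis
    by (rule interp_convex[OF cm mq lw[OF _ Lc] up[OF qk Uq] Am Aq]) (use cm mk in simp)
qed



lemma ZL:
  fixes f :: "nat \<Rightarrow> real" and b k :: nat
  assumes mono: "\<And>i j. b < i \<Longrightarrow> i \<le> j \<Longrightarrow> j \<le> b + k \<Longrightarrow> f i \<le> f j"
    and zero: "(\<Sum>i\<in>{b<..b+k}. f i) = 0"
    and pre: "\<And>m. m \<le> k \<Longrightarrow> (\<Sum>i\<in>{b<..b+m}. f i) \<ge> -(3/2) * real m * (real k - real m)"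
  shows "\<exists>C. (\<forall>i j. 0 \<le> C i j \<and> C i j \<le> 3/2) \<and> (\<forall>i j. C i j \<noteq> 0 \<longrightarrow> b < j \<and> j < i \<and> i \<le> b + k)
      \<and> (\<forall>i\<in>{b<..b+k}. f i = netf {b<..b+k} C i)"
  using assms
proof (induction k arbitrary: f)
  case 0
  show ?case by (rule exI[of _ "\<lambda>_ _. 0"]) auto
next
  case (Suc k)
  note mono = Suc.prems(1) and zero = Suc.prems(2) and pre = Suc.prems(3)
  define T where "T = f (b + Suc k)"
  have sumk: "(\<Sum>i\<in>{b<..b+k}. f i) = - T"
    using zero sum_ivl_Suc[of f b k] unfolding T_def by simp
  show ?case
  proof (cases "k = 0")
    case True
    have "T = 0" using sumk True by simp
    hence "f (b+1) = 0" using True T_def by simp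
    moreover have "{b<..b + Suc k} = {b+1}" using True by auto
    ultimately show ?thesis by (intro exI[of _ "\<lambda>_ _. 0"]) (auto simp: netf_def)
  next
    case False
    hence k1: "k \<ge> 1" by simp
    define g where "g = (\<lambda>lam. \<Sum>j\<in>{b<..b+k}. (min (f j + 3/2) (max (f j) lam) - f j))"
    have gc: "continuous_on {f (b+1) .. f (b+k) + 3/2} g"
      unfolding g_def by (intro continuous_intros)
    have g0: "g (f (b+1)) = 0"
      unfolding g_def
    proof (rule sum.neutral, rule ballI)
      fix j assume "j \<in> {b<..b+k}"
      hence "f (b+1) \<le> f j" using mono[of "b+1" j] by simp
      thus "min (f j + 3/2) (max (f j) (f (b+1))) - f j = 0" by simp
    qed
    have g1: "g (f (b+k) + 3/2) = (3/2) * real k"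
    proof -
      have "g (f (b+k) + 3/2) = (\<Sum>j\<in>{b<..b+k}. 3/2)"
        unfolding g_def
      proof (rule sum.cong[OF refl])
        fix j assume "j \<in> {b<..b+k}"
        hence "f j \<le> f (b+k)" using mono[of j "b+k"] by simp
        thus "min (f j + 3/2) (max (f j) (f (b+k) + 3/2)) - f j = 3/2" by simp
      qed
      thus ?thesis by simp
    qed
    have T0: "T \<ge> 0"
    proof -
      have "(\<Sum>i\<in>{b<..b+Suc k}. f i) \<le> (\<Sum>i\<in>{b<..b+Suc k}. T)"
        by (rule sum_mono) (use mono in \<open>auto simp: T_def\<close>)
      thus ?thesis using zero by (simp add: zero_le_mult_iff)
    qed
    have Tk: "T \<le> (3/2) * real k"
      using pre[of k] sumk by simp
    have ab: "f (b+1) \<le> f (b+k) + 3/2" using mono[of "b+1" "b+k"] k1 by simp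
    obtain lam where lam: "f (b+1) \<le> lam" "lam \<le> f (b+k) + 3/2" "g lam = T"
      using IVT'[of g "f (b+1)" T "f (b+k) + 3/2", OF _ _ ab gc] g0 g1 T0 Tk by auto
    define f' where "f' = (\<lambda>j. min (f j + 3/2) (max (f j) lam))"
    have f'mono: "\<And>i j. b < i \<Longrightarrow> i \<le> j \<Longrightarrow> j \<le> b + k \<Longrightarrow> f' i \<le> f' j"
    proof -
      fix i j assume "b < i" "i \<le> j" "j \<le> b + k"
      hence "f i \<le> f j" using mono by simp
      thus "f' i \<le> f' j" unfolding f'_def by (auto simp: min_def max_def)
    qed
    have f'ge: "\<And>j. f j \<le> f' j" and f'le: "\<And>j. f' j \<le> f j + 3/2" unfolding f'_def by auto
    have sumf': "(\<Sum>j\<in>{b<..b+k}. f' j) = 0"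
    proof -
      have "(\<Sum>j\<in>{b<..b+k}. f' j) = (\<Sum>j\<in>{b<..b+k}. f j) + g lam"
        unfolding g_def f'_def by (simp add: sum.distrib[symmetric])
      thus ?thesis using lam sumk by simp
    qed
    have pre': "\<And>m. m \<le> k \<Longrightarrow> (\<Sum>i\<in>{b<..b+m}. f' i) \<ge> -(3/2) * real m * (real k - real m)"
    proof -
      fix m assume mk: "m \<le> k"
      define A where "A = (\<lambda>m. \<Sum>i\<in>{b<..b+m}. f' i)"
      define Lw where "Lw = (\<lambda>m. m = 0 \<or> f (b+m) + 3/2 \<le> lam)"
      define Up where "Up = (\<lambda>m. m = k \<or> lam \<le> f (b+m+1))"
      have "A m \<ge> -(3/2) * real m * (real k - real m)"
      proof (rule region_prefix[where val = "\<lambda>j. f' (b+j)" and Lw = Lw and Up = Up and lam = lam])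
        show "\<And>m. A (Suc m) = A m + f' (b + Suc m)"
          unfolding A_def using sum_ivl_Suc by simp
        show "Lw 0" unfolding Lw_def by simp
        show "Up k" unfolding Up_def by simp
        show "m \<le> k" by fact
        show "\<And>i j. i \<le> j \<Longrightarrow> j \<le> k \<Longrightarrow> Lw j \<Longrightarrow> Lw i"
        proof -
          fix i j assume "i \<le> j" "j \<le> k" "Lw j"
          show "Lw i"
          proof (cases "i = 0")
            case False
            hence "j \<noteq> 0" using \<open>i \<le> j\<close> by simp
            hence "f (b+j) + 3/2 \<le> lam" using \<open>Lw j\<close> Lw_def by simp
            moreover have "f (b+i) \<le> f (b+j)" using mono[of "b+i" "b+j"] False \<open>i \<le> j\<close> \<open>j \<le> k\<close> by simp
            ultimately show ?thesis unfolding Lw_def by simp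
          qed (simp add: Lw_def)
        qed
        show "\<And>i j. i \<le> j \<Longrightarrow> j \<le> k \<Longrightarrow> Up i \<Longrightarrow> Up j"
        proof -
          fix i j assume "i \<le> j" "j \<le> k" "Up i"
          show "Up j"
          proof (cases "j = k")
            case False
            hence "i \<noteq> k" using \<open>i \<le> j\<close> \<open>j \<le> k\<close> by simp
            hence "lam \<le> f (b+i+1)" using \<open>Up i\<close> Up_def by simp
            moreover have "f (b+i+1) \<le> f (b+j+1)" using mono[of "b+i+1" "b+j+1"] \<open>i \<le> j\<close> \<open>j \<le> k\<close> by simp
            ultimately show ?thesis unfolding Up_def by simp
          qed (simp add: Up_def)
        qed
        show "\<And>j. 1 \<le> j \<Longrightarrow> j \<le> k \<Longrightarrow> \<not> Lw j \<Longrightarrow> \<not> Up (j-1) \<Longrightarrow> f' (b+j) = lam"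
        proof -
          fix j assume "1 \<le> j" "j \<le> k" "\<not> Lw j" "\<not> Up (j-1)"
          hence "lam < f (b+j) + 3/2" "f (b+j) < lam" unfolding Lw_def Up_def by auto
          thus "f' (b+j) = lam" unfolding f'_def by simp
        qed
        show "\<And>m. m \<le> k \<Longrightarrow> Lw m \<Longrightarrow> A m \<ge> -(3/2) * real m * (real k - real m)"
        proof -
          fix m assume mk: "m \<le> k" and L: "Lw m"
          show "A m \<ge> -(3/2) * real m * (real k - real m)"
          proof (cases "m = 0")
            case True thus ?thesis by (simp add: A_def)
          next
            case False
            hence cap: "f (b+m) + 3/2 \<le> lam" using L Lw_def by simp
            have "A m = (\<Sum>i\<in>{b<..b+m}. f i + 3/2)"
              unfolding A_def
            proof (rule sum.cong[OF refl])
              fix i assume "i \<in> {b<..b+m}"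
              hence "f i \<le> f (b+m)" using mono[of i "b+m"] mk by simp
              thus "f' i = f i + 3/2" unfolding f'_def using cap by simp
            qed
            also have "\<dots> = (\<Sum>i\<in>{b<..b+m}. f i) + (3/2) * real m" by (simp add: sum.distrib)
            finally have Am: "A m = (\<Sum>i\<in>{b<..b+m}. f i) + (3/2) * real m" .
            have h: "-(3/2)*real m*(real (Suc k) - real m) \<le> (\<Sum>i\<in>{b<..b+m}. f i)" using pre[of m] mk by simp
            have "-(3/2)*real m*(real k - real m) = -(3/2)*real m*(real (Suc k) - real m) + 3/2*real m"
              by (simp add: field_simps)
            thus ?thesis using Am h by linarith
          qed
        qed
        show "\<And>m. m \<le> k \<Longrightarrow> Up m \<Longrightarrow> A m \<ge> -(3/2) * real m * (real k - real m)"
        proof -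
          fix m assume mk: "m \<le> k" and U: "Up m"
          show "A m \<ge> -(3/2) * real m * (real k - real m)"
          proof (cases "m = k")
            case True thus ?thesis using sumf' by (simp add: A_def)
          next
            case False
            hence nr: "lam \<le> f (b+m+1)" using U Up_def by simp
            have rest: "(\<Sum>i\<in>{b+m<..b+k}. f' i) = (\<Sum>i\<in>{b+m<..b+k}. f i)"
            proof (rule sum.cong[OF refl])
              fix i assume "i \<in> {b+m<..b+k}"
              hence "f (b+m+1) \<le> f i" using mono[of "b+m+1" i] by simp
              thus "f' i = f i" unfolding f'_def using nr by simp
            qed
            have Am: "A m = - (\<Sum>i\<in>{b+m<..b+k}. f i)"
              using sum_split_ivl[OF mk, of f' b] sumf' rest unfolding A_def by simp
            define P where "P = (\<Sum>i\<in>{b<..b+m}. f i)"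
            have Pm0: "P \<ge> -(3/2) * real m * (real (Suc k) - real m)" using pre[of m] mk P_def by simp
            have Pm: "P \<ge> -(3/2) * real m * (real k + 1 - real m)" using Pm0 by (simp add: add_ac)
            have tot: "P + (\<Sum>i\<in>{b+m<..b+k}. f i) + T = 0"
              using sum_split_ivl[OF mk, of f b] sumk P_def by simp
            have "(\<Sum>i\<in>{b+m<..b+k}. f i) \<le> (\<Sum>i\<in>{b+m<..b+k}. T)"
              by (rule sum_mono) (use mono in \<open>auto simp: T_def\<close>)
            hence bnd: "- P - T \<le> real (k - m) * T" using tot by simp
            have km: "real (k - m) = real k - real m" using mk by (simp add: of_nat_diff)
            have "(real k + 1 - real m) * (P + T) \<ge> (real k - real m) * P"
              using bnd km by (simp add: algebra_simps)
            moreover have "(real k - real m) * P \<ge> (real k - real m) * (-(3/2) * real m * (real k + 1 - real m))"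
              using Pm mk by (intro mult_left_mono) auto
            ultimately have "(real k + 1 - real m) * (P + T) \<ge> (real k + 1 - real m) * (-(3/2) * real m * (real k - real m))"
              by (simp add: algebra_simps)
            moreover have "real k + 1 - real m > 0" using mk by simp
            ultimately have "P + T \<ge> -(3/2) * real m * (real k - real m)"
              by (rule mult_left_le_imp_le)
            moreover have "A m = P + T" using Am tot by simp
            ultimately show ?thesis by simp
          qed
        qed
      qed
      thus "(\<Sum>i\<in>{b<..b+m}. f' i) \<ge> -(3/2) * real m * (real k - real m)" unfolding A_def .
    qed
    obtain C' where C': "\<forall>i j. 0 \<le> C' i j \<and> C' i j \<le> 3/2" "\<forall>i j. C' i j \<noteq> 0 \<longrightarrow> b < j \<and> j < i \<and> i \<le> b + k"
        "\<forall>i\<in>{b<..b+k}. f' i = netf {b<..b+k} C' i"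
      using Suc.IH[of f', OF f'mono sumf' pre'] by blast
    define C where "C = (\<lambda>i j. C' i j + (if i = b + Suc k \<and> b < j \<and> j \<le> b + k then f' j - f j else 0))"
    show ?thesis
    proof (intro exI[of _ C] conjI)
      show "\<forall>i j. 0 \<le> C i j \<and> C i j \<le> 3/2"
      proof (intro allI)
        fix i j
        show "0 \<le> C i j \<and> C i j \<le> 3/2"
        proof (cases "i = b + Suc k \<and> b < j \<and> j \<le> b + k")
          case True
          hence "C' i j = 0" using C'(2) by fastforce
          thus ?thesis using True f'ge[of j] f'le[of j] unfolding C_def by simp
        next
          case False
          have "C i j = C' i j" unfolding C_def by (simp only: if_not_P[OF False] add_0_right)
          thus ?thesis using C'(1) by simp
        qed
      qed
      show "\<forall>i j. C i j \<noteq> 0 \<longrightarrow> b < j \<and> j < i \<and> i \<le> b + Suc k"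
      proof (intro allI impI)
        fix i j assume nz: "C i j \<noteq> 0"
        show "b < j \<and> j < i \<and> i \<le> b + Suc k"
        proof (cases "i = b + Suc k \<and> b < j \<and> j \<le> b + k")
          case True thus ?thesis by auto
        next
          case False
          have "C i j = C' i j" unfolding C_def by (simp only: if_not_P[OF False] add_0_right)
          hence "C' i j \<noteq> 0" using nz by simp
          thus ?thesis using C'(2) by fastforce
        qed
      qed
      show "\<forall>i\<in>{b<..b + Suc k}. f i = netf {b<..b + Suc k} C i"
      proof
        fix i assume iI: "i \<in> {b<..b + Suc k}"
        have D: "{b<..b + Suc k} = insert (b + Suc k) {b<..b+k}" by auto
        have Cz1: "C' (b + Suc k) j = 0" for j using C'(2) by fastforce
        have Cz2: "C' j (b + Suc k) = 0" for j using C'(2) by fastforce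
        show "f i = netf {b<..b + Suc k} C i"
        proof (cases "i = b + Suc k")
          case True
          have s1: "(\<Sum>j\<in>{b<..b + Suc k}. C i j) = (\<Sum>j\<in>{b<..b+k}. f' j - f j)"
            unfolding D using True Cz1 by (simp add: C_def)
          have s2: "(\<Sum>j\<in>{b<..b + Suc k}. C j i) = 0"
            unfolding D using True Cz2 by (simp add: C_def)
          have "(\<Sum>j\<in>{b<..b+k}. f' j - f j) = T" using sumf' sumk by (simp add: sum_subtractf)
          thus ?thesis using s1 s2 True T_def by (simp add: netf_def)
        next
          case False
          hence ik: "i \<in> {b<..b+k}" using iI by auto
          have s1: "(\<Sum>j\<in>{b<..b + Suc k}. C i j) = (\<Sum>j\<in>{b<..b+k}. C' i j)"
            unfolding D using False Cz2 by (simp add: C_def)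
          have s2: "(\<Sum>j\<in>{b<..b + Suc k}. C j i) = (\<Sum>j\<in>{b<..b+k}. C' j i) + (f' i - f i)"
          proof -
            have "(\<Sum>j\<in>{b<..b+k}. C j i) = (\<Sum>j\<in>{b<..b+k}. C' j i)"
              by (rule sum.cong) (auto simp: C_def)
            moreover have "C (b + Suc k) i = f' i - f i" using Cz1 ik by (simp add: C_def)
            ultimately show ?thesis unfolding D by simp
          qed
          show ?thesis using s1 s2 C'(3) ik by (simp add: netf_def)
        qed
      qed
    qed
  qed
qed



definition clampr :: "real \<Rightarrow> real \<Rightarrow> real \<Rightarrow> real" where
  "clampr L U x = max L (min U x)"

lemma clampr_mono_diff:
  assumes "L \<le> U" "x1 \<le> x2"
  shows "x1 - clampr L U x1 \<le> x2 - clampr L U x2"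
  using assms by (auto simp: clampr_def min_def max_def)

lemma BL:
  fixes y :: "nat \<Rightarrow> real" and b k :: nat and L U :: real
  assumes mono: "\<And>i j. b < i \<Longrightarrow> i \<le> j \<Longrightarrow> j \<le> b + k \<Longrightarrow> y i \<le> y j"
    and lo: "\<And>m. 1 \<le> m \<Longrightarrow> m \<le> k \<Longrightarrow> (\<Sum>i\<in>{b<..b+m}. y i) \<ge> -(3/2) * real m * (real k - real m) + L * real m"
    and up: "\<And>m. m < k \<Longrightarrow> (\<Sum>i\<in>{b+m<..b+k}. y i) \<le> (3/2) * real m * (real k - real m) + U * (real k - real m)"
  shows "\<exists>C cc. (\<forall>i j. 0 \<le> C i j \<and> C i j \<le> 3/2) \<and> (\<forall>i j. C i j \<noteq> 0 \<longrightarrow> b < j \<and> j < i \<and> i \<le> b + k)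
      \<and> (\<forall>i\<in>{b<..b+k}. L \<le> cc i \<and> cc i \<le> U)
      \<and> (\<forall>i\<in>{b<..b+k}. y i = netf {b<..b+k} C i + cc i)"
proof (cases "k = 0")
  case True
  thus ?thesis by (intro exI[of _ "\<lambda>_ _. 0"] exI[of _ "\<lambda>_. L"]) auto
next
  case False
  hence k1: "k \<ge> 1" by simp
  define Y where "Y = (\<Sum>i\<in>{b<..b+k}. y i)"
  have Yl: "Y \<ge> L * real k" using lo[of k] k1 Y_def by simp
  have Yu: "Y \<le> U * real k" using up[of 0] k1 Y_def by simp
  have LU: "L \<le> U"
  proof -
    have "L * real k \<le> U * real k" using Yl Yu by simp
    thus ?thesis using k1 by simp
  qed
  define h where "h = (\<lambda>mu. \<Sum>i\<in>{b<..b+k}. (y i - clampr L U (y i - mu)))"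
  define mu1 where "mu1 = y (b+1) - U"
  define mu2 where "mu2 = y (b+k) - L"
  have m12: "mu1 \<le> mu2" using mono[of "b+1" "b+k"] k1 LU unfolding mu1_def mu2_def by simp
  have hc: "continuous_on {mu1..mu2} h" unfolding h_def clampr_def by (intro continuous_intros)
  have h1: "h mu1 = Y - U * real k"
  proof -
    have "h mu1 = (\<Sum>i\<in>{b<..b+k}. (y i - U))"
      unfolding h_def
    proof (rule sum.cong[OF refl])
      fix i assume "i \<in> {b<..b+k}"
      hence "y (b+1) \<le> y i" using mono[of "b+1" i] by simp
      thus "y i - clampr L U (y i - mu1) = y i - U" using LU unfolding clampr_def mu1_def by simp
    qed
    thus ?thesis by (simp add: sum_subtractf Y_def)
  qed
  have h2: "h mu2 = Y - L * real k"
  proof -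
    have "h mu2 = (\<Sum>i\<in>{b<..b+k}. (y i - L))"
      unfolding h_def
    proof (rule sum.cong[OF refl])
      fix i assume "i \<in> {b<..b+k}"
      hence "y i \<le> y (b+k)" using mono[of i "b+k"] by simp
      thus "y i - clampr L U (y i - mu2) = y i - L" using LU unfolding clampr_def mu2_def by simp
    qed
    thus ?thesis by (simp add: sum_subtractf Y_def)
  qed
  obtain mu where mu: "h mu = 0"
    using IVT'[of h mu1 0 mu2, OF _ _ m12 hc] h1 h2 Yl Yu by auto
  define f where "f = (\<lambda>i. y i - clampr L U (y i - mu))"
  define cc where "cc = (\<lambda>i. clampr L U (y i - mu))"
  have fmono: "\<And>i j. b < i \<Longrightarrow> i \<le> j \<Longrightarrow> j \<le> b + k \<Longrightarrow> f i \<le> f j"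
  proof -
    fix i j assume "b < i" "i \<le> j" "j \<le> b + k"
    hence "y i - mu \<le> y j - mu" using mono by simp
    from clampr_mono_diff[OF LU this] show "f i \<le> f j" unfolding f_def by simp
  qed
  have fzero: "(\<Sum>i\<in>{b<..b+k}. f i) = 0" using mu unfolding h_def f_def by simp
  have fpre: "\<And>m. m \<le> k \<Longrightarrow> (\<Sum>i\<in>{b<..b+m}. f i) \<ge> -(3/2) * real m * (real k - real m)"
  proof -
    fix m assume mk: "m \<le> k"
    define A where "A = (\<lambda>m. \<Sum>i\<in>{b<..b+m}. f i)"
    define Lw where "Lw = (\<lambda>m. m = 0 \<or> y (b+m) - mu \<le> L)"
    define Up where "Up = (\<lambda>m. m = k \<or> U \<le> y (b+m+1) - mu)"
    have "A m \<ge> -(3/2) * real m * (real k - real m)"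
    proof (rule region_prefix[where val = "\<lambda>j. f (b+j)" and Lw = Lw and Up = Up and lam = mu])
      show "\<And>m. A (Suc m) = A m + f (b + Suc m)"
        unfolding A_def using sum_ivl_Suc by simp
      show "Lw 0" unfolding Lw_def by simp
      show "Up k" unfolding Up_def by simp
      show "m \<le> k" by fact
      show "\<And>i j. i \<le> j \<Longrightarrow> j \<le> k \<Longrightarrow> Lw j \<Longrightarrow> Lw i"
      proof -
        fix i j assume "i \<le> j" "j \<le> k" "Lw j"
        show "Lw i"
        proof (cases "i = 0")
          case False
          hence "j \<noteq> 0" using \<open>i \<le> j\<close> by simp
          hence "y (b+j) - mu \<le> L" using \<open>Lw j\<close> Lw_def by simp
          moreover have "y (b+i) \<le> y (b+j)" using mono[of "b+i" "b+j"] False \<open>i \<le> j\<close> \<open>j \<le> k\<close> by simp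
          ultimately show ?thesis unfolding Lw_def by simp
        qed (simp add: Lw_def)
      qed
      show "\<And>i j. i \<le> j \<Longrightarrow> j \<le> k \<Longrightarrow> Up i \<Longrightarrow> Up j"
      proof -
        fix i j assume "i \<le> j" "j \<le> k" "Up i"
        show "Up j"
        proof (cases "j = k")
          case False
          hence "i \<noteq> k" using \<open>i \<le> j\<close> \<open>j \<le> k\<close> by simp
          hence "U \<le> y (b+i+1) - mu" using \<open>Up i\<close> Up_def by simp
          moreover have "y (b+i+1) \<le> y (b+j+1)" using mono[of "b+i+1" "b+j+1"] \<open>i \<le> j\<close> \<open>j \<le> k\<close> False by simp
          ultimately show ?thesis unfolding Up_def by simp
        qed (simp add: Up_def)
      qed
      show "\<And>j. 1 \<le> j \<Longrightarrow> j \<le> k \<Longrightarrow> \<not> Lw j \<Longrightarrow> \<not> Up (j-1) \<Longrightarrow> f (b+j) = mu"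
      proof -
        fix j assume "1 \<le> j" "j \<le> k" "\<not> Lw j" "\<not> Up (j-1)"
        hence "L < y (b+j) - mu" "y (b+j) - mu < U" unfolding Lw_def Up_def by auto
        thus "f (b+j) = mu" unfolding f_def clampr_def by simp
      qed
      show "\<And>m. m \<le> k \<Longrightarrow> Lw m \<Longrightarrow> A m \<ge> -(3/2) * real m * (real k - real m)"
      proof -
        fix m assume mk: "m \<le> k" and Lm: "Lw m"
        show "A m \<ge> -(3/2) * real m * (real k - real m)"
        proof (cases "m = 0")
          case True thus ?thesis by (simp add: A_def)
        next
          case False
          hence cap: "y (b+m) - mu \<le> L" using Lm Lw_def by simp
          have "A m = (\<Sum>i\<in>{b<..b+m}. y i - L)"
            unfolding A_def
          proof (rule sum.cong[OF refl])
            fix i assume "i \<in> {b<..b+m}"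
            hence "y i \<le> y (b+m)" using mono[of i "b+m"] mk by simp
            thus "f i = y i - L" unfolding f_def clampr_def using cap LU by simp
          qed
          also have "\<dots> = (\<Sum>i\<in>{b<..b+m}. y i) - L * real m" by (simp add: sum_subtractf)
          finally show ?thesis using lo[of m] mk False by simp
        qed
      qed
      show "\<And>m. m \<le> k \<Longrightarrow> Up m \<Longrightarrow> A m \<ge> -(3/2) * real m * (real k - real m)"
      proof -
        fix m assume mk: "m \<le> k" and Um: "Up m"
        show "A m \<ge> -(3/2) * real m * (real k - real m)"
        proof (cases "m = k")
          case True thus ?thesis using fzero by (simp add: A_def)
        next
          case False
          hence nr: "U \<le> y (b+m+1) - mu" using Um Up_def by simp
          have rest: "(\<Sum>i\<in>{b+m<..b+k}. f i) = (\<Sum>i\<in>{b+m<..b+k}. y i - U)"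
          proof (rule sum.cong[OF refl])
            fix i assume "i \<in> {b+m<..b+k}"
            hence "y (b+m+1) \<le> y i" using mono[of "b+m+1" i] by simp
            thus "f i = y i - U" unfolding f_def clampr_def using nr LU by simp
          qed
          have km: "card {b+m<..b+k} = k - m" by simp
          have rest2: "(\<Sum>i\<in>{b+m<..b+k}. f i) = (\<Sum>i\<in>{b+m<..b+k}. y i) - U * (real k - real m)"
            using rest mk by (simp add: sum_subtractf of_nat_diff)
          have Am: "A m = - (\<Sum>i\<in>{b+m<..b+k}. f i)"
            using sum_split_ivl[OF mk, of f b] fzero unfolding A_def by simp
          have mk': "m < k" using mk False by simp
          show ?thesis using Am rest2 up[OF mk'] by simp
        qed
      qed
    qed
    thus "(\<Sum>i\<in>{b<..b+m}. f i) \<ge> -(3/2) * real m * (real k - real m)" unfolding A_def .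
  qed
  obtain C where C: "\<forall>i j. 0 \<le> C i j \<and> C i j \<le> 3/2" "\<forall>i j. C i j \<noteq> 0 \<longrightarrow> b < j \<and> j < i \<and> i \<le> b + k"
      "\<forall>i\<in>{b<..b+k}. f i = netf {b<..b+k} C i"
    using ZL[of b k f, OF fmono fzero fpre] by blast
  show ?thesis
  proof (intro exI[of _ C] exI[of _ cc] conjI)
    show "\<forall>i\<in>{b<..b+k}. L \<le> cc i \<and> cc i \<le> U" using LU by (auto simp: cc_def clampr_def)
    show "\<forall>i\<in>{b<..b+k}. y i = netf {b<..b+k} C i + cc i" using C(3) by (auto simp: f_def cc_def)
  qed (use C in auto)
qed



lemma BLs:
  fixes y :: "nat \<Rightarrow> real" and b k :: nat and L U :: real
  assumes mono: "\<And>i j. b < i \<Longrightarrow> i \<le> j \<Longrightarrow> j \<le> b + k \<Longrightarrow> y i \<le> y j"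
    and lo: "\<And>m. 1 \<le> m \<Longrightarrow> m \<le> k \<Longrightarrow> (\<Sum>i\<in>{b<..b+m}. y i) > -(3/2) * real m * (real k - real m) + L * real m"
    and up: "\<And>m. m < k \<Longrightarrow> (\<Sum>i\<in>{b+m<..b+k}. y i) \<le> (3/2) * real m * (real k - real m) + U * (real k - real m)"
  shows "\<exists>C cc. (\<forall>i j. 0 \<le> C i j \<and> C i j \<le> 3/2) \<and> (\<forall>i j. C i j \<noteq> 0 \<longrightarrow> b < j \<and> j < i \<and> i \<le> b + k)
      \<and> (\<forall>i\<in>{b<..b+k}. L < cc i \<and> cc i \<le> U)
      \<and> (\<forall>i\<in>{b<..b+k}. y i = netf {b<..b+k} C i + cc i)"
proof (cases "k = 0")
  case True
  thus ?thesis by (intro exI[of _ "\<lambda>_ _. 0"] exI[of _ "\<lambda>_. L"]) auto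
next
  case False
  define sl where "sl = (\<lambda>m. ((\<Sum>i\<in>{b<..b+m}. y i) + (3/2) * real m * (real k - real m) - L * real m) / real m)"
  define eps where "eps = Min (sl ` {1..k})"
  have slpos: "\<And>m. m \<in> {1..k} \<Longrightarrow> sl m > 0"
  proof -
    fix m assume "m \<in> {1..k}"
    hence "(\<Sum>i\<in>{b<..b+m}. y i) + (3/2) * real m * (real k - real m) - L * real m > 0" "real m > 0"
      using lo[of m] by auto
    thus "sl m > 0" unfolding sl_def by simp
  qed
  have epspos: "eps > 0" unfolding eps_def using False slpos by (subst Min_gr_iff) auto
  have epsle: "\<And>m. m \<in> {1..k} \<Longrightarrow> eps \<le> sl m" unfolding eps_def by simp
  have lo': "\<And>m. 1 \<le> m \<Longrightarrow> m \<le> k \<Longrightarrow> (\<Sum>i\<in>{b<..b+m}. y i) \<ge> -(3/2) * real m * (real k - real m) + (L + eps) * real m"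
  proof -
    fix m assume "1 \<le> m" "m \<le> k"
    hence e: "eps \<le> sl m" and mp: "real m > 0" using epsle by auto
    hence "eps * real m \<le> sl m * real m" by (simp add: mult_right_mono)
    also have "sl m * real m = (\<Sum>i\<in>{b<..b+m}. y i) + (3/2) * real m * (real k - real m) - L * real m"
      unfolding sl_def using mp by simp
    finally show "(\<Sum>i\<in>{b<..b+m}. y i) \<ge> -(3/2) * real m * (real k - real m) + (L + eps) * real m"
      by (simp add: algebra_simps)
  qed
  obtain C cc where CC: "(\<forall>i j. 0 \<le> C i j \<and> C i j \<le> 3/2)" "(\<forall>i j. C i j \<noteq> 0 \<longrightarrow> b < j \<and> j < i \<and> i \<le> b + k)"
      "(\<forall>i\<in>{b<..b+k}. L + eps \<le> cc i \<and> cc i \<le> U)" "(\<forall>i\<in>{b<..b+k}. y i = netf {b<..b+k} C i + cc i)"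
    using BL[of b k y "L + eps" U, OF mono lo' up] by blast
  show ?thesis
    by (rule exI[of _ C], rule exI[of _ cc]) (use CC epspos in fastforce)
qed

definition FF :: "nat \<Rightarrow> nat \<Rightarrow> (nat \<Rightarrow> real) \<Rightarrow> bool" where
  "FF a d x \<longleftrightarrow> (\<exists>C g. (\<forall>i j. 0 \<le> C i j \<and> C i j \<le> 3/2) \<and> (\<forall>m. -(real a + 2)/2 \<le> g m \<and> g m \<le> real a / 2)
      \<and> (\<forall>m\<in>{1..d}. x m = netf {1..d} C m + g m))"

lemma sum_u_beta:
  assumes "m \<in> {1..d}"
  shows "(\<Sum>k\<in>{1..d}. u k * (c * beta k m)) = u m * c"
proof -
  have "(\<Sum>k\<in>{1..d}. u k * (c * beta k m)) = (\<Sum>k\<in>{1..d}. if k = m then u k * c else 0)"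
    by (rule sum.cong) (auto simp: beta_simp)
  thus ?thesis using assms by (simp add: sum.delta)
qed

lemma vzon_FF:
  assumes "x \<in> Vzon a d"
  shows "FF a d x"
proof -
  obtain t u v where tuv: "\<forall>i j. 0 \<le> t i j \<and> t i j \<le> 1" "\<forall>k. -1 \<le> u k \<and> u k \<le> 1" "\<forall>k. 0 \<le> v k \<and> v k \<le> 1"
    "\<forall>m\<in>{1..d}. x m = (\<Sum>i\<in>{1..d}. \<Sum>j\<in>{1..d}. t i j * ((3/2) * (beta i m - beta j m)))
        + (\<Sum>k\<in>{1..d}. u k * ((real a / 2) * beta k m)) + (\<Sum>k\<in>{1..d}. v k * (- beta k m))"
    using assms unfolding Vzon_def by blast
  define C where "C = (\<lambda>i j. (3/2) * t i j)"
  define g where "g = (\<lambda>m. u m * (real a / 2) - v m)"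
  show ?thesis unfolding FF_def
  proof (intro exI[of _ C] exI[of _ g] conjI)
    show "\<forall>i j. 0 \<le> C i j \<and> C i j \<le> 3/2" using tuv(1) by (simp add: C_def)
    show "\<forall>m. -(real a + 2)/2 \<le> g m \<and> g m \<le> real a / 2"
    proof
      fix m
      have "-1 \<le> u m" "u m \<le> 1" "0 \<le> v m" "v m \<le> 1" using tuv by auto
      moreover have "-(real a / 2) \<le> u m * (real a / 2)" "u m * (real a / 2) \<le> real a / 2"
        using mult_right_mono[of "-1" "u m" "real a / 2"] mult_right_mono[of "u m" 1 "real a / 2"] \<open>-1 \<le> u m\<close> \<open>u m \<le> 1\<close> by auto
      ultimately show "-(real a + 2)/2 \<le> g m \<and> g m \<le> real a / 2" by (simp add: g_def)
    qed
    show "\<forall>m\<in>{1..d}. x m = netf {1..d} C m + g m"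
    proof
      fix m assume m: "m \<in> {1..d}"
      have e1: "(\<Sum>i\<in>{1..d}. \<Sum>j\<in>{1..d}. t i j * ((3/2) * (beta i m - beta j m)))
          = (\<Sum>i\<in>{1..d}. \<Sum>j\<in>{1..d}. C i j * (beta i m - beta j m))"
        by (intro sum.cong refl) (simp add: C_def algebra_simps)
      have e3: "(\<Sum>k\<in>{1..d}. v k * (- beta k m)) = - v m"
        using sum_u_beta[OF m, of v "-1"] by simp
      show "x m = netf {1..d} C m + g m"
        using tuv(4) m e1 e3 sum_u_beta[OF m, of u "real a / 2"] net_expand[of "{1..d}" m C]
        by (simp add: netf_def g_def)
    qed
  qed
qed

lemma FF_vzon:
  assumes "FF a d x"
  shows "x \<in> Vzon a d"
proof -
  obtain C g where Cg: "\<forall>i j. 0 \<le> C i j \<and> C i j \<le> 3/2" "\<forall>m. -(real a + 2)/2 \<le> g m \<and> g m \<le> real a / 2"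
    "\<forall>m\<in>{1..d}. x m = netf {1..d} C m + g m" using assms unfolding FF_def by blast
  define t where "t = (\<lambda>i j. (2/3) * C i j)"
  define v where "v = (\<lambda>m. max 0 (-(real a / 2) - g m))"
  define u where "u = (\<lambda>m. if a = 0 then 0 else (g m + v m) / (real a / 2))"
  have gv: "\<And>m. -(real a / 2) \<le> g m + v m \<and> g m + v m \<le> real a / 2 \<and> 0 \<le> v m \<and> v m \<le> 1"
  proof -
    fix m show "-(real a / 2) \<le> g m + v m \<and> g m + v m \<le> real a / 2 \<and> 0 \<le> v m \<and> v m \<le> 1"
      using Cg(2)[rule_format, of m] unfolding v_def by (auto simp: max_def field_simps)
  qed
  have uv: "\<And>m. u m * (real a / 2) - v m = g m"
  proof -
    fix m show "u m * (real a / 2) - v m = g m"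
    proof (cases "a = 0")
      case True thus ?thesis using gv[of m] unfolding u_def by simp
    next
      case False thus ?thesis unfolding u_def by (simp add: field_simps)
    qed
  qed
  have ub: "\<And>m. -1 \<le> u m \<and> u m \<le> 1"
  proof -
    fix m show "-1 \<le> u m \<and> u m \<le> 1"
    proof (cases "a = 0")
      case True thus ?thesis unfolding u_def by simp
    next
      case False
      hence ap: "real a / 2 > 0" by simp
      thus ?thesis using gv[of m] unfolding u_def by (simp add: divide_le_eq le_divide_eq)
    qed
  qed
  have T1: "\<forall>i j. 0 \<le> t i j \<and> t i j \<le> 1" using Cg(1) by (auto simp: t_def algebra_simps)
  have T2: "\<forall>k. -1 \<le> u k \<and> u k \<le> 1" using ub by blast
  have T3: "\<forall>k. 0 \<le> v k \<and> v k \<le> 1" using gv by blast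
  have T4: "\<forall>m\<in>{1..d}. x m = (\<Sum>i\<in>{1..d}. \<Sum>j\<in>{1..d}. t i j * ((3/2) * (beta i m - beta j m)))
        + (\<Sum>k\<in>{1..d}. u k * ((real a / 2) * beta k m)) + (\<Sum>k\<in>{1..d}. v k * (- beta k m))"
    proof
      fix m assume m: "m \<in> {1..d}"
      have e1: "(\<Sum>i\<in>{1..d}. \<Sum>j\<in>{1..d}. t i j * ((3/2) * (beta i m - beta j m)))
          = (\<Sum>i\<in>{1..d}. \<Sum>j\<in>{1..d}. C i j * (beta i m - beta j m))"
        by (intro sum.cong refl) (simp add: t_def field_simps)
      have e3: "(\<Sum>k\<in>{1..d}. v k * (- beta k m)) = - v m"
        using sum_u_beta[OF m, of v "-1"] by simp
      show "x m = (\<Sum>i\<in>{1..d}. \<Sum>j\<in>{1..d}. t i j * ((3/2) * (beta i m - beta j m)))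
        + (\<Sum>k\<in>{1..d}. u k * ((real a / 2) * beta k m)) + (\<Sum>k\<in>{1..d}. v k * (- beta k m))"
        using Cg(3) m e1 e3 sum_u_beta[OF m, of u "real a / 2"] net_expand[of "{1..d}" m C] uv[of m]
        by (simp add: netf_def)
    qed
  show ?thesis unfolding Vzon_def using T1 T2 T3 T4 by blast
qed

lemma dsum_bounds:
  assumes "\<forall>i j. 0 \<le> C i j \<and> C i j \<le> 3/2" "finite S" "finite T"
  shows "0 \<le> (\<Sum>m\<in>S. \<Sum>j\<in>T. C m j) \<and> (\<Sum>m\<in>S. \<Sum>j\<in>T. C m j) \<le> (3/2) * real (card S) * real (card T)"
proof
  show "0 \<le> (\<Sum>m\<in>S. \<Sum>j\<in>T. C m j)" using assms by (intro sum_nonneg) auto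
  have "(\<Sum>m\<in>S. \<Sum>j\<in>T. C m j) \<le> (\<Sum>m\<in>S. \<Sum>j\<in>T. 3/2)"
    using assms by (intro sum_mono) auto
  thus "(\<Sum>m\<in>S. \<Sum>j\<in>T. C m j) \<le> (3/2) * real (card S) * real (card T)" by simp
qed

lemma FF_sum_bounds:
  assumes "FF a d x" "S \<subseteq> {1..d}"
  shows "(\<Sum>m\<in>S. x m) \<ge> -(3/2) * real (card S) * (real d - real (card S)) - (real a + 2)/2 * real (card S)"
    and "(\<Sum>m\<in>S. x m) \<le> (3/2) * real (card S) * (real d - real (card S)) + real a / 2 * real (card S)"
proof -
  obtain C g where Cg: "\<forall>i j. 0 \<le> C i j \<and> C i j \<le> 3/2" "\<forall>m. -(real a + 2)/2 \<le> g m \<and> g m \<le> real a / 2"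
    "\<forall>m\<in>{1..d}. x m = netf {1..d} C m + g m" using assms unfolding FF_def by blast
  have fS: "finite S" using assms finite_subset by blast
  have cS: "card S \<le> d" using card_mono[OF _ assms(2)] by simp
  have cD: "real (card ({1..d} - S)) = real d - real (card S)"
    using assms fS cS by (simp add: card_Diff_subset of_nat_diff)
  have xs: "(\<Sum>m\<in>S. x m) = (\<Sum>m\<in>S. netf {1..d} C m) + (\<Sum>m\<in>S. g m)"
    using Cg(3) assms by (simp add: sum.distrib[symmetric] subset_iff)
  have ns: "(\<Sum>m\<in>S. netf {1..d} C m) = (\<Sum>m\<in>S. \<Sum>j\<in>{1..d}-S. C m j) - (\<Sum>m\<in>S. \<Sum>i\<in>{1..d}-S. C i m)"
    using netf_subset_sum[of "{1..d}" S C] assms by simp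
  have b1: "0 \<le> (\<Sum>m\<in>S. \<Sum>j\<in>{1..d}-S. C m j) \<and> (\<Sum>m\<in>S. \<Sum>j\<in>{1..d}-S. C m j) \<le> (3/2) * real (card S) * (real d - real (card S))"
    using dsum_bounds[OF Cg(1) fS, of "{1..d}-S"] cD by simp
  have Ct: "\<forall>i j. 0 \<le> C j i \<and> C j i \<le> 3/2" using Cg(1) by blast
  have b2: "0 \<le> (\<Sum>m\<in>S. \<Sum>i\<in>{1..d}-S. C i m) \<and> (\<Sum>m\<in>S. \<Sum>i\<in>{1..d}-S. C i m) \<le> (3/2) * real (card S) * (real d - real (card S))"
    using dsum_bounds[OF Ct fS, of "{1..d}-S"] cD by simp
  have g1': "(\<Sum>m\<in>S. g m) \<ge> (\<Sum>m\<in>S. -(real a + 2)/2)" using Cg(2) by (intro sum_mono) auto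
  have g2': "(\<Sum>m\<in>S. g m) \<le> (\<Sum>m\<in>S. real a / 2)" using Cg(2) by (intro sum_mono) auto
  have g1: "(\<Sum>m\<in>S. g m) \<ge> -(real a + 2)/2 * real (card S)" using g1' by (simp add: mult.commute)
  have g2: "(\<Sum>m\<in>S. g m) \<le> real a / 2 * real (card S)" using g2' by (simp add: mult.commute)
  show "(\<Sum>m\<in>S. x m) \<ge> -(3/2) * real (card S) * (real d - real (card S)) - (real a + 2)/2 * real (card S)"
    using xs ns b1 b2 g1 by linarith
  show "(\<Sum>m\<in>S. x m) \<le> (3/2) * real (card S) * (real d - real (card S)) + real a / 2 * real (card S)"
    using xs ns b1 b2 g2 by linarith
qed

lemma signed_FF:
  assumes Db: "\<forall>i j. -(3/2) \<le> D i j \<and> D i j \<le> 3/2" and Ds: "\<forall>i j. D i j \<noteq> 0 \<longrightarrow> j < i"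
    and gb: "\<forall>m. -(real a + 2)/2 \<le> g m \<and> g m \<le> real a / 2"
    and x: "\<forall>m\<in>{1..d}. x m = netf {1..d} D m + g m"
  shows "FF a d x"
proof -
  define C where "C = (\<lambda>i j. max (D i j) 0 + max (- D j i) 0)"
  have Cb: "\<forall>i j. 0 \<le> C i j \<and> C i j \<le> 3/2"
  proof (intro allI)
    fix i j
    have bb: "-(3/2) \<le> D j i" "D j i \<le> 3/2" "-(3/2) \<le> D i j" "D i j \<le> 3/2" using Db by auto
    show "0 \<le> C i j \<and> C i j \<le> 3/2"
    proof (cases "j < i")
      case True
      hence "D j i = 0" using Ds by (metis less_asym)
      thus ?thesis using bb unfolding C_def by (auto simp: max_def)
    next
      case False
      hence "D i j = 0" using Ds by blast
      thus ?thesis using bb unfolding C_def by (auto simp: max_def)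
    qed
  qed
  have net: "\<And>m. netf {1..d} C m = netf {1..d} D m"
  proof -
    fix m
    have mx: "\<And>z::real. max z 0 - max (-z) 0 = z" by (auto simp: max_def)
    have "netf {1..d} C m = ((\<Sum>j\<in>{1..d}. max (D m j) 0) - (\<Sum>j\<in>{1..d}. max (- D m j) 0))
        - ((\<Sum>i\<in>{1..d}. max (D i m) 0) - (\<Sum>i\<in>{1..d}. max (- D i m) 0))"
      unfolding netf_def C_def by (simp add: sum.distrib algebra_simps)
    also have "\<dots> = (\<Sum>j\<in>{1..d}. D m j) - (\<Sum>i\<in>{1..d}. D i m)"
      by (simp add: sum_subtractf[symmetric] mx)
    finally show "netf {1..d} C m = netf {1..d} D m" by (simp add: netf_def)
  qed
  show ?thesis unfolding FF_def using Cb gb x net by metis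
qed

lemma FF_perm:
  assumes "FF a d x" "bij_betw w {1..d} {1..d}"
  shows "FF a d (\<lambda>m. x (w m))"
proof -
  obtain C g where Cg: "\<forall>i j. 0 \<le> C i j \<and> C i j \<le> 3/2" "\<forall>m. -(real a + 2)/2 \<le> g m \<and> g m \<le> real a / 2"
    "\<forall>m\<in>{1..d}. x m = netf {1..d} C m + g m" using assms unfolding FF_def by blast
  define C' where "C' = (\<lambda>i j. C (w i) (w j))"
  define g' where "g' = (\<lambda>m. g (w m))"
  have "\<forall>m\<in>{1..d}. x (w m) = netf {1..d} C' m + g' m"
  proof
    fix m assume m: "m \<in> {1..d}"
    hence wm: "w m \<in> {1..d}" using assms(2) bij_betwE by blast
    have s1: "(\<Sum>j\<in>{1..d}. C' m j) = (\<Sum>j\<in>{1..d}. C (w m) j)"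
      unfolding C'_def using sum.reindex_bij_betw[OF assms(2), of "\<lambda>j. C (w m) j"] by simp
    have s2: "(\<Sum>i\<in>{1..d}. C' i m) = (\<Sum>i\<in>{1..d}. C i (w m))"
      unfolding C'_def using sum.reindex_bij_betw[OF assms(2), of "\<lambda>i. C i (w m)"] by simp
    show "x (w m) = netf {1..d} C' m + g' m"
      using Cg(3) wm s1 s2 by (simp add: netf_def g'_def)
  qed
  thus ?thesis unfolding FF_def using Cg(1,2) by (metis C'_def g'_def)
qed



definition Ctot :: "nat \<Rightarrow> (nat \<Rightarrow> nat \<Rightarrow> real) \<Rightarrow> nat \<Rightarrow> nat \<Rightarrow> real" where
  "Ctot e c i j = (if j < i \<and> i \<le> e then c i j else 0) + (if e < j \<and> j < i then c i j else 0)
     + (if j \<le> e \<and> e < i then 3/2 else 0)"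

lemma three_sums:
  assumes "m \<in> {1..d}"
  shows "(\<Sum>i\<in>{1..d}. \<Sum>j\<in>{1..d}. if j < i \<and> i \<le> e then c i j * (beta i m - beta j m) else 0)
        + (\<Sum>i\<in>{1..d}. \<Sum>j\<in>{1..d}. if e < j \<and> j < i then c i j * (beta i m - beta j m) else 0)
        + (\<Sum>i\<in>{1..d}. \<Sum>j\<in>{1..d}. if j \<le> e \<and> e < i then (3/2) * (beta i m - beta j m) else 0)
        + (\<Sum>i\<in>{1..d}. cc i * beta i m)
      = netf {1..d} (Ctot e c) m + cc m"
proof -
  have "(\<Sum>i\<in>{1..d}. \<Sum>j\<in>{1..d}. if j < i \<and> i \<le> e then c i j * (beta i m - beta j m) else 0)
        + (\<Sum>i\<in>{1..d}. \<Sum>j\<in>{1..d}. if e < j \<and> j < i then c i j * (beta i m - beta j m) else 0)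
        + (\<Sum>i\<in>{1..d}. \<Sum>j\<in>{1..d}. if j \<le> e \<and> e < i then (3/2) * (beta i m - beta j m) else 0)
      = (\<Sum>i\<in>{1..d}. \<Sum>j\<in>{1..d}. (if j < i \<and> i \<le> e then c i j * (beta i m - beta j m) else 0)
          + (if e < j \<and> j < i then c i j * (beta i m - beta j m) else 0)
          + (if j \<le> e \<and> e < i then (3/2) * (beta i m - beta j m) else 0))"
    by (simp add: sum.distrib)
  also have "\<dots> = (\<Sum>i\<in>{1..d}. \<Sum>j\<in>{1..d}. Ctot e c i j * (beta i m - beta j m))"
    by (intro sum.cong refl) (auto simp: Ctot_def field_simps)
  also have "\<dots> = netf {1..d} (Ctot e c) m"
    using net_expand[of "{1..d}" m "Ctot e c"] assms by (simp add: netf_def)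
  finally show ?thesis using sum_u_beta[OF assms, of cc 1] by simp
qed

definition flowform :: "nat \<Rightarrow> nat \<Rightarrow> (nat \<Rightarrow> real) \<Rightarrow> nat \<Rightarrow> (nat \<Rightarrow> nat \<Rightarrow> real) \<Rightarrow> (nat \<Rightarrow> real) \<Rightarrow> bool" where
  "flowform a d x e C cc \<longleftrightarrow> (\<forall>i j. 0 \<le> C i j \<and> C i j \<le> 3/2) \<and> (\<forall>i j. C i j \<noteq> 0 \<longrightarrow> j < i)
     \<and> (\<forall>i j. j \<le> e \<longrightarrow> e < i \<longrightarrow> C i j = 3/2)
     \<and> (\<forall>i. 1 \<le> i \<longrightarrow> i \<le> e \<longrightarrow> -(real a + 2)/2 \<le> cc i \<and> cc i \<le> - real a / 2)
     \<and> (\<forall>i. e < i \<longrightarrow> i \<le> d \<longrightarrow> - real a / 2 < cc i \<and> cc i \<le> real a / 2)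
     \<and> (\<forall>m\<in>{1..d}. x m = netf {1..d} C m + cc m)"

lemma e_decomp_flow:
  assumes "e_decomp a d x e"
  shows "\<exists>C cc. flowform a d x e C cc"
proof -
  obtain c cc where cc: "(\<forall>i j. 0 \<le> c i j \<and> c i j \<le> 3/2)"
      "(\<forall>i. 1 \<le> i \<longrightarrow> i \<le> e \<longrightarrow> -(real a + 2)/2 \<le> cc i \<and> cc i \<le> - real a / 2)"
      "(\<forall>i. e < i \<longrightarrow> i \<le> d \<longrightarrow> - real a / 2 < cc i \<and> cc i \<le> real a / 2)"
      "(\<forall>m\<in>{1..d}. x m =
          (\<Sum>i\<in>{1..d}. \<Sum>j\<in>{1..d}.
              if j < i \<and> i \<le> e then c i j * (beta i m - beta j m) else 0)
        + (\<Sum>i\<in>{1..d}. \<Sum>j\<in>{1..d}.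
              if e < j \<and> j < i then c i j * (beta i m - beta j m) else 0)
        + (\<Sum>i\<in>{1..d}. \<Sum>j\<in>{1..d}.
              if j \<le> e \<and> e < i then (3/2) * (beta i m - beta j m) else 0)
        + (\<Sum>i\<in>{1..d}. cc i * beta i m))"
    using assms unfolding e_decomp_def by blast
  have "flowform a d x e (Ctot e c) cc"
    unfolding flowform_def
  proof (intro conjI)
    show "\<forall>i j. 0 \<le> Ctot e c i j \<and> Ctot e c i j \<le> 3/2"
      using cc(1) by (auto simp: Ctot_def)
    show "\<forall>i j. Ctot e c i j \<noteq> 0 \<longrightarrow> j < i" by (auto simp: Ctot_def)
    show "\<forall>i j. j \<le> e \<longrightarrow> e < i \<longrightarrow> Ctot e c i j = 3/2" by (auto simp: Ctot_def)
    show "\<forall>m\<in>{1..d}. x m = netf {1..d} (Ctot e c) m + cc m"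
      using cc(4) three_sums by simp
  qed (use cc in auto)
  thus ?thesis by blast
qed

lemma gt0_ivl: "{0<..n::nat} = {1..n}" by auto

definition plx :: "nat \<Rightarrow> nat \<Rightarrow> (nat \<Rightarrow> real) \<Rightarrow> nat \<Rightarrow> real" where
  "plx a d x l = (\<Sum>i\<in>{1..l}. x i) + (3/2) * real l * (real d - real l) + (real a / 2) * real l"

lemma p_l_plx: "p_l a d mu l psi = plx a d (shifted d mu psi) l"
  by (simp add: p_l_def plx_def)

lemma flow_prefix:
  assumes ff: "flowform a d x e C cc" and ld: "l \<le> d"
  shows "plx a d x l \<ge> (\<Sum>m\<in>{1..l}. cc m + real a / 2)"
    and "l = e \<Longrightarrow> plx a d x l = (\<Sum>m\<in>{1..l}. cc m + real a / 2)"
proof -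
  have Cb: "\<forall>i j. 0 \<le> C i j \<and> C i j \<le> 3/2" and Cs: "\<forall>i j. C i j \<noteq> 0 \<longrightarrow> j < i"
    and Cx: "\<forall>i j. j \<le> e \<longrightarrow> e < i \<longrightarrow> C i j = 3/2"
    and xe: "\<forall>m\<in>{1..d}. x m = netf {1..d} C m + cc m" using ff unfolding flowform_def by auto
  have S: "{1..l} \<subseteq> {1..d}" using ld by auto
  have xs: "(\<Sum>m\<in>{1..l}. x m) = (\<Sum>m\<in>{1..l}. netf {1..d} C m) + (\<Sum>m\<in>{1..l}. cc m)"
    using xe S by (simp add: sum.distrib[symmetric] subset_iff)
  have ns: "(\<Sum>m\<in>{1..l}. netf {1..d} C m) = (\<Sum>m\<in>{1..l}. \<Sum>j\<in>{1..d}-{1..l}. C m j) - (\<Sum>m\<in>{1..l}. \<Sum>i\<in>{1..d}-{1..l}. C i m)"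
    using netf_subset_sum[of "{1..d}" "{1..l}" C] S by simp
  have z: "(\<Sum>m\<in>{1..l}. \<Sum>j\<in>{1..d}-{1..l}. C m j) = 0"
  proof (intro sum.neutral ballI)
    fix m j assume "m \<in> {1..l}" "j \<in> {1..d}-{1..l}"
    hence "\<not> j < m" by auto
    thus "C m j = 0" using Cs by blast
  qed
  have cD: "card ({1..d} - {1..l}) = d - l" using S by (simp add: card_Diff_subset)
  have Ct: "\<forall>i j. 0 \<le> C j i \<and> C j i \<le> 3/2" using Cb by blast
  have b2: "(\<Sum>m\<in>{1..l}. \<Sum>i\<in>{1..d}-{1..l}. C i m) \<le> (3/2) * real l * (real d - real l)"
    using dsum_bounds[OF Ct, of "{1..l}" "{1..d}-{1..l}"] cD ld by (simp add: of_nat_diff)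
  have sc: "(\<Sum>m\<in>{1..l}. cc m + real a / 2) = (\<Sum>m\<in>{1..l}. cc m) + real a / 2 * real l"
    by (simp add: sum.distrib)
  show "plx a d x l \<ge> (\<Sum>m\<in>{1..l}. cc m + real a / 2)"
    using xs ns z b2 sc unfolding plx_def by linarith
  assume le: "l = e"
  have "(\<Sum>m\<in>{1..l}. \<Sum>i\<in>{1..d}-{1..l}. C i m) = (\<Sum>m\<in>{1..l}. \<Sum>i\<in>{1..d}-{1..l}. 3/2)"
    using Cx le by (intro sum.cong refl) auto
  hence "(\<Sum>m\<in>{1..l}. \<Sum>i\<in>{1..d}-{1..l}. C i m) = (3/2) * real l * (real d - real l)"
    using cD ld by (simp add: of_nat_diff)
  thus "plx a d x l = (\<Sum>m\<in>{1..l}. cc m + real a / 2)"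
    using xs ns z sc unfolding plx_def by linarith
qed

lemma flow_argmin:
  assumes ff: "flowform a d x e C cc" and ed: "e \<le> d"
  shows "\<And>l. l \<le> d \<Longrightarrow> plx a d x l \<ge> plx a d x e"
    and "\<And>l. e < l \<Longrightarrow> l \<le> d \<Longrightarrow> plx a d x l > plx a d x e"
proof -
  have c1: "\<forall>i. 1 \<le> i \<longrightarrow> i \<le> e \<longrightarrow> -(real a + 2)/2 \<le> cc i \<and> cc i \<le> - real a / 2"
    and c2: "\<forall>i. e < i \<longrightarrow> i \<le> d \<longrightarrow> - real a / 2 < cc i \<and> cc i \<le> real a / 2"
    using ff unfolding flowform_def by auto
  have pe: "plx a d x e = (\<Sum>m\<in>{1..e}. cc m + real a / 2)" using flow_prefix(2)[OF ff ed] by simp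
  show "\<And>l. l \<le> d \<Longrightarrow> plx a d x l \<ge> plx a d x e"
  proof -
    fix l assume ld: "l \<le> d"
    have pl: "plx a d x l \<ge> (\<Sum>m\<in>{1..l}. cc m + real a / 2)" using flow_prefix(1)[OF ff ld] .
    show "plx a d x l \<ge> plx a d x e"
    proof (cases "l \<le> e")
      case True
      have sp: "(\<Sum>m\<in>{1..e}. cc m + real a / 2) = (\<Sum>m\<in>{1..l}. cc m + real a / 2) + (\<Sum>m\<in>{l<..e}. cc m + real a / 2)"
        using sum_split_ivl[OF True, of "\<lambda>m. cc m + real a / 2" 0] by (simp add: gt0_ivl)
      have "(\<Sum>m\<in>{l<..e}. cc m + real a / 2) \<le> 0"
      proof (intro sum_nonpos)
        fix m assume "m \<in> {l<..e}"
        hence "1 \<le> m" "m \<le> e" by auto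
        thus "cc m + real a / 2 \<le> 0" using c1 by auto
      qed
      thus ?thesis using pl pe sp by linarith
    next
      case False
      hence le: "e \<le> l" by simp
      have sp: "(\<Sum>m\<in>{1..l}. cc m + real a / 2) = (\<Sum>m\<in>{1..e}. cc m + real a / 2) + (\<Sum>m\<in>{e<..l}. cc m + real a / 2)"
        using sum_split_ivl[OF le, of "\<lambda>m. cc m + real a / 2" 0] by (simp add: gt0_ivl)
      have "(\<Sum>m\<in>{e<..l}. cc m + real a / 2) \<ge> 0"
      proof (intro sum_nonneg)
        fix m assume "m \<in> {e<..l}"
        hence "e < m" "m \<le> d" using ld by auto
        hence "- real a / 2 < cc m" using c2 by blast
        thus "cc m + real a / 2 \<ge> 0" by simp
      qed
      thus ?thesis using pl pe sp by linarith
    qed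
  qed
  show "\<And>l. e < l \<Longrightarrow> l \<le> d \<Longrightarrow> plx a d x l > plx a d x e"
  proof -
    fix l assume el: "e < l" and ld: "l \<le> d"
    have pl: "plx a d x l \<ge> (\<Sum>m\<in>{1..l}. cc m + real a / 2)" using flow_prefix(1)[OF ff ld] .
    have le: "e \<le> l" using el by simp
    have sp: "(\<Sum>m\<in>{1..l}. cc m + real a / 2) = (\<Sum>m\<in>{1..e}. cc m + real a / 2) + (\<Sum>m\<in>{e<..l}. cc m + real a / 2)"
      using sum_split_ivl[OF le, of "\<lambda>m. cc m + real a / 2" 0] by (simp add: gt0_ivl)
    have "(\<Sum>m\<in>{e<..l}. cc m + real a / 2) > 0"
    proof (rule sum_pos)
      show "finite {e<..l}" by simp
      show "{e<..l} \<noteq> {}" using el by auto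
      fix m assume "m \<in> {e<..l}"
      hence "e < m" "m \<le> d" using ld by auto
      hence "- real a / 2 < cc m" using c2 by blast
      thus "cc m + real a / 2 > 0" by simp
    qed
    thus "plx a d x l > plx a d x e" using pl pe sp by linarith
  qed
qed

lemma e_of_eq:
  assumes ed: "e \<le> d" and dec: "e_decomp a d (shifted d mu psi) e"
  shows "e_of a d mu psi = e"
proof -
  let ?x = "shifted d mu psi"
  have uniq: "e' = e" if e'd: "e' \<le> d" and dec': "e_decomp a d ?x e'" for e'
  proof (rule ccontr)
    assume ne: "e' \<noteq> e"
    obtain C cc where ff: "flowform a d ?x e C cc" using e_decomp_flow[OF dec] by blast
    obtain C' cc' where ff': "flowform a d ?x e' C' cc'" using e_decomp_flow[OF dec'] by blast
    show False
    proof (cases "e < e'")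
      case True
      have "plx a d ?x e' > plx a d ?x e" using flow_argmin(2)[OF ff ed True e'd] .
      moreover have "plx a d ?x e \<ge> plx a d ?x e'" using flow_argmin(1)[OF ff' e'd ed] .
      ultimately show False by simp
    next
      case False
      hence "e' < e" using ne by simp
      hence "plx a d ?x e > plx a d ?x e'" using flow_argmin(2)[OF ff' e'd _ ed] by simp
      moreover have "plx a d ?x e' \<ge> plx a d ?x e" using flow_argmin(1)[OF ff ed e'd] .
      ultimately show False by simp
    qed
  qed
  show ?thesis unfolding e_of_def
  proof (rule the_equality)
    show "e \<le> d \<and> e_decomp a d ?x e" using ed dec by simp
    fix e' assume "e' \<le> d \<and> e_decomp a d ?x e'"
    thus "e' = e" using uniq by blast
  qed
qed



lemma netf_restrict:
  assumes "finite D" "B \<subseteq> D" "\<And>i j. C i j \<noteq> 0 \<Longrightarrow> i \<in> B \<and> j \<in> B"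
  shows "netf D C m = netf B C m"
proof -
  have "(\<Sum>j\<in>D. C m j) = (\<Sum>j\<in>B. C m j)"
    by (rule sum.mono_neutral_right) (use assms in auto)
  moreover have "(\<Sum>i\<in>D. C i m) = (\<Sum>i\<in>B. C i m)"
    by (rule sum.mono_neutral_right) (use assms in auto)
  ultimately show ?thesis by (simp add: netf_def)
qed

lemma netf_zero:
  assumes "\<And>j. C m j = 0" "\<And>i. C i m = 0"
  shows "netf D C m = 0"
  using assms by (simp add: netf_def)

lemma netf_add3: "netf D (\<lambda>i j. A i j + B i j + X i j) m = netf D A m + netf D B m + netf D X m"
  by (simp add: netf_def sum.distrib)

lemma sum_if_const:
  fixes c :: real and d :: nat
  shows "(\<Sum>i\<in>{1..d}. if P i then c else 0) = c * real (card {i\<in>{1..d}. P i})"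
proof -
  have "(\<Sum>i\<in>{1..d}. if P i then c else 0) = (\<Sum>i\<in>{i\<in>{1..d}. P i}. c)"
    by (rule sum.inter_filter[symmetric]) simp
  also have "\<dots> = c * real (card {i\<in>{1..d}. P i})" by simp
  finally show ?thesis .
qed

lemma exists_e:
  assumes mono: "\<And>i j. 1 \<le> i \<Longrightarrow> i \<le> j \<Longrightarrow> j \<le> d \<Longrightarrow> x i \<le> x j" and V: "FF a d x"
  shows "\<exists>e\<le>d. e_decomp a d x e"
proof -
  define P where "P = plx a d x"
  define mn where "mn = Min (P ` {0..d})"
  define ES where "ES = {l \<in> {0..d}. P l = mn}"
  define e where "e = Max ES"
  have mnin: "mn \<in> P ` {0..d}" unfolding mn_def by (intro Min_in) auto
  have ESne: "ES \<noteq> {}" "finite ES" using mnin unfolding ES_def by auto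
  have eES: "e \<in> ES" unfolding e_def using ESne by simp
  have ed: "e \<le> d" and Pe: "P e = mn" using eES ES_def by auto
  have Pge: "\<And>l. l \<le> d \<Longrightarrow> P l \<ge> P e" unfolding Pe mn_def by (intro Min_le) auto
  have Pgt: "\<And>l. e < l \<Longrightarrow> l \<le> d \<Longrightarrow> P l > P e"
  proof -
    fix l assume el: "e < l" and ld: "l \<le> d"
    have "P l \<noteq> mn"
    proof
      assume "P l = mn"
      hence "l \<in> ES" using ld ES_def by simp
      hence "l \<le> e" unfolding e_def using ESne by simp
      thus False using el by simp
    qed
    thus "P l > P e" using Pge[OF ld] Pe by simp
  qed
  have sumsplit: "\<And>m n. m \<le> n \<Longrightarrow> (\<Sum>i\<in>{1..n}. x i) = (\<Sum>i\<in>{1..m}. x i) + (\<Sum>i\<in>{m<..n}. x i)"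
    using sum_split_ivl[of _ _ x 0] by (simp add: gt0_ivl)
  define y1 where "y1 = (\<lambda>i. x i + (3/2) * (real d - real e))"
  obtain C1 cc1 where B1: "\<forall>i j. 0 \<le> C1 i j \<and> C1 i j \<le> 3/2" "\<forall>i j. C1 i j \<noteq> 0 \<longrightarrow> 0 < j \<and> j < i \<and> i \<le> 0 + e"
      "\<forall>i\<in>{0<..0+e}. -(real a + 2)/2 \<le> cc1 i \<and> cc1 i \<le> - real a / 2"
      "\<forall>i\<in>{0<..0+e}. y1 i = netf {0<..0+e} C1 i + cc1 i"
  proof -
    have "\<exists>C cc. (\<forall>i j. 0 \<le> C i j \<and> C i j \<le> 3/2) \<and> (\<forall>i j. C i j \<noteq> 0 \<longrightarrow> 0 < j \<and> j < i \<and> i \<le> 0 + e)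
      \<and> (\<forall>i\<in>{0<..0+e}. -(real a + 2)/2 \<le> cc i \<and> cc i \<le> - real a / 2)
      \<and> (\<forall>i\<in>{0<..0+e}. y1 i = netf {0<..0+e} C i + cc i)"
    proof (rule BL)
      show "\<And>i j. 0 < i \<Longrightarrow> i \<le> j \<Longrightarrow> j \<le> 0 + e \<Longrightarrow> y1 i \<le> y1 j"
        unfolding y1_def using mono ed by simp
      show "\<And>m. 1 \<le> m \<Longrightarrow> m \<le> e \<Longrightarrow> (\<Sum>i\<in>{0<..0+m}. y1 i) \<ge> -(3/2) * real m * (real e - real m) + (-(real a + 2)/2) * real m"
      proof -
        fix m assume m1: "1 \<le> m" and me: "m \<le> e"
        have S: "{1..m} \<subseteq> {1..d}" using me ed by auto
        have fb: "(\<Sum>i\<in>{1..m}. x i) \<ge> -(3/2) * real m * (real d - real m) - (real a + 2)/2 * real m"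
          using FF_sum_bounds(1)[OF V S] by simp
        have "(\<Sum>i\<in>{0<..0+m}. y1 i) = (\<Sum>i\<in>{1..m}. x i) + real m * ((3/2) * (real d - real e))"
          unfolding y1_def by (simp add: gt0_ivl sum.distrib)
        moreover have "-(3/2) * real m * (real d - real m) + real m * ((3/2) * (real d - real e)) = -(3/2) * real m * (real e - real m)"
          by (simp add: field_simps)
        ultimately show "(\<Sum>i\<in>{0<..0+m}. y1 i) \<ge> -(3/2) * real m * (real e - real m) + (-(real a + 2)/2) * real m"
          using fb by linarith
      qed
      show "\<And>m. m < e \<Longrightarrow> (\<Sum>i\<in>{0+m<..0+e}. y1 i) \<le> (3/2) * real m * (real e - real m) + (- real a / 2) * (real e - real m)"
      proof -
        fix m assume me: "m < e"
        have "P m \<ge> P e" using Pge me ed by simp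
        hence h: "(\<Sum>i\<in>{1..m}. x i) + (3/2) * real m * (real d - real m) + (real a / 2) * real m
            \<ge> (\<Sum>i\<in>{1..e}. x i) + (3/2) * real e * (real d - real e) + (real a / 2) * real e"
          unfolding P_def plx_def .
        have sp: "(\<Sum>i\<in>{1..e}. x i) = (\<Sum>i\<in>{1..m}. x i) + (\<Sum>i\<in>{m<..e}. x i)" using sumsplit me by simp
        have cm: "card {m<..e} = e - m" by simp
        have "(\<Sum>i\<in>{0+m<..0+e}. y1 i) = (\<Sum>i\<in>{m<..e}. x i) + (real e - real m) * ((3/2) * (real d - real e))"
          unfolding y1_def using me by (simp add: sum.distrib of_nat_diff)
        moreover have "(3/2) * real m * (real d - real m) - (3/2) * real e * (real d - real e) + (real e - real m) * ((3/2) * (real d - real e))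
            = (3/2) * real m * (real e - real m)" by (simp add: field_simps)
        moreover have ai: "(- real a / 2) * (real e - real m) = real a / 2 * real m - real a / 2 * real e"
          by (simp add: field_simps)
        ultimately show "(\<Sum>i\<in>{0+m<..0+e}. y1 i) \<le> (3/2) * real m * (real e - real m) + (- real a / 2) * (real e - real m)"
          using h sp ai by linarith
      qed
    qed
    thus ?thesis using that by blast
  qed
  define y2 where "y2 = (\<lambda>i. x i - (3/2) * real e)"
  have kd: "real (d - e) = real d - real e" using ed by (simp add: of_nat_diff)
  obtain C2 cc2 where B2: "\<forall>i j. 0 \<le> C2 i j \<and> C2 i j \<le> 3/2" "\<forall>i j. C2 i j \<noteq> 0 \<longrightarrow> e < j \<and> j < i \<and> i \<le> e + (d - e)"
      "\<forall>i\<in>{e<..e+(d-e)}. - real a / 2 < cc2 i \<and> cc2 i \<le> real a / 2"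
      "\<forall>i\<in>{e<..e+(d-e)}. y2 i = netf {e<..e+(d-e)} C2 i + cc2 i"
  proof -
    have "\<exists>C cc. (\<forall>i j. 0 \<le> C i j \<and> C i j \<le> 3/2) \<and> (\<forall>i j. C i j \<noteq> 0 \<longrightarrow> e < j \<and> j < i \<and> i \<le> e + (d - e))
      \<and> (\<forall>i\<in>{e<..e+(d-e)}. - real a / 2 < cc i \<and> cc i \<le> real a / 2)
      \<and> (\<forall>i\<in>{e<..e+(d-e)}. y2 i = netf {e<..e+(d-e)} C i + cc i)"
    proof (rule BLs)
      show "\<And>i j. e < i \<Longrightarrow> i \<le> j \<Longrightarrow> j \<le> e + (d - e) \<Longrightarrow> y2 i \<le> y2 j"
        unfolding y2_def using mono ed by simp
      show "\<And>m. 1 \<le> m \<Longrightarrow> m \<le> d - e \<Longrightarrow> (\<Sum>i\<in>{e<..e+m}. y2 i) > -(3/2) * real m * (real (d - e) - real m) + (- real a / 2) * real m"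
      proof -
        fix m assume m1: "1 \<le> m" and md: "m \<le> d - e"
        have "P (e + m) > P e" using Pgt m1 md by simp
        hence h: "(\<Sum>i\<in>{1..e+m}. x i) + (3/2) * real (e + m) * (real d - real (e + m)) + (real a / 2) * real (e + m)
            > (\<Sum>i\<in>{1..e}. x i) + (3/2) * real e * (real d - real e) + (real a / 2) * real e"
          unfolding P_def plx_def .
        have sp: "(\<Sum>i\<in>{1..e+m}. x i) = (\<Sum>i\<in>{1..e}. x i) + (\<Sum>i\<in>{e<..e+m}. x i)" using sumsplit by simp
        have "(\<Sum>i\<in>{e<..e+m}. y2 i) = (\<Sum>i\<in>{e<..e+m}. x i) - real m * ((3/2) * real e)"
          unfolding y2_def by (simp add: sum_subtractf)
        moreover have "(3/2) * real e * (real d - real e) - (3/2) * real (e + m) * (real d - real (e + m)) - real m * ((3/2) * real e)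
            = -(3/2) * real m * ((real d - real e) - real m)" by (simp add: field_simps)
        moreover have ai: "(real a / 2) * real (e + m) = (real a / 2) * real e + (real a / 2) * real m"
          by (simp add: field_simps)
        ultimately show "(\<Sum>i\<in>{e<..e+m}. y2 i) > -(3/2) * real m * (real (d - e) - real m) + (- real a / 2) * real m"
          using h sp ai unfolding kd by linarith
      qed
      show "\<And>m. m < d - e \<Longrightarrow> (\<Sum>i\<in>{e+m<..e+(d-e)}. y2 i) \<le> (3/2) * real m * (real (d - e) - real m) + (real a / 2) * (real (d - e) - real m)"
      proof -
        fix m assume md: "m < d - e"
        have S: "{e+m<..d} \<subseteq> {1..d}" by auto
        have cS: "card {e+m<..d} = d - e - m" by simp
        have cSr: "real (card {e+m<..d}) = real d - real e - real m" using md cS by (simp add: of_nat_diff)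
        have fb: "(\<Sum>i\<in>{e+m<..d}. x i) \<le> (3/2) * (real d - real e - real m) * (real d - (real d - real e - real m)) + real a / 2 * (real d - real e - real m)"
          using FF_sum_bounds(2)[OF V S] by (simp only: cSr)
        have "(\<Sum>i\<in>{e+m<..e+(d-e)}. y2 i) = (\<Sum>i\<in>{e+m<..d}. x i) - (real d - real e - real m) * ((3/2) * real e)"
          unfolding y2_def using ed cSr by (simp add: sum_subtractf)
        moreover have "(3/2) * (real d - real e - real m) * (real d - (real d - real e - real m)) - (real d - real e - real m) * ((3/2) * real e)
            = (3/2) * real m * ((real d - real e) - real m)" by (simp add: field_simps)
        ultimately show "(\<Sum>i\<in>{e+m<..e+(d-e)}. y2 i) \<le> (3/2) * real m * (real (d - e) - real m) + (real a / 2) * (real (d - e) - real m)"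
          using fb unfolding kd by linarith
      qed
    qed
    thus ?thesis using that by blast
  qed
  define c where "c = (\<lambda>i j. C1 i j + C2 i j)"
  define cc where "cc = (\<lambda>i. if i \<le> e then cc1 i else cc2 i)"
  define X where "X = (\<lambda>i j. if j \<le> e \<and> e < i then (3/2::real) else 0)"
  have ed': "e + (d - e) = d" using ed by simp
  have C1s: "\<And>i j. C1 i j \<noteq> 0 \<Longrightarrow> 0 < j \<and> j < i \<and> i \<le> e" using B1(2) by simp
  have C2s: "\<And>i j. C2 i j \<noteq> 0 \<Longrightarrow> e < j \<and> j < i \<and> i \<le> d" using B2(2) ed' by simp
  have C1s': "\<And>i j. C1 i j \<noteq> 0 \<Longrightarrow> i \<in> {0<..e} \<and> j \<in> {0<..e}"
  proof -
    fix i j assume "C1 i j \<noteq> 0" from C1s[OF this] show "i \<in> {0<..e} \<and> j \<in> {0<..e}" by auto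
  qed
  have C2s': "\<And>i j. C2 i j \<noteq> 0 \<Longrightarrow> i \<in> {e<..d} \<and> j \<in> {e<..d}"
  proof -
    fix i j assume "C2 i j \<noteq> 0" from C2s[OF this] show "i \<in> {e<..d} \<and> j \<in> {e<..d}" by auto
  qed
  have cb: "\<forall>i j. 0 \<le> c i j \<and> c i j \<le> 3/2"
  proof (intro allI)
    fix i j
    show "0 \<le> c i j \<and> c i j \<le> 3/2"
    proof (cases "C1 i j = 0")
      case True thus ?thesis using B2(1) by (simp add: c_def)
    next
      case False
      hence "C2 i j = 0" using C1s C2s by (meson le_less_trans less_asym)
      thus ?thesis using B1(1) by (simp add: c_def)
    qed
  qed
  have Ct: "\<And>i j. Ctot e c i j = C1 i j + C2 i j + X i j"
  proof -
    fix i j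
    show "Ctot e c i j = C1 i j + C2 i j + X i j"
    proof (cases "C1 i j = 0")
      case True
      show ?thesis
      proof (cases "C2 i j = 0")
        case True2: True
        thus ?thesis using True by (simp add: Ctot_def c_def X_def)
      next
        case False
        hence "e < j \<and> j < i" using C2s by blast
        thus ?thesis using True by (simp add: Ctot_def c_def X_def)
      qed
    next
      case False
      hence h: "0 < j \<and> j < i \<and> i \<le> e" using C1s by blast
      hence "C2 i j = 0" using C2s by fastforce
      thus ?thesis using h by (simp add: Ctot_def c_def X_def)
    qed
  qed
  have eq: "\<forall>m\<in>{1..d}. x m = netf {1..d} (Ctot e c) m + cc m"
  proof
    fix m assume m: "m \<in> {1..d}"
    have nt: "netf {1..d} (Ctot e c) m = netf {1..d} C1 m + netf {1..d} C2 m + netf {1..d} X m"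
    proof -
      have "Ctot e c = (\<lambda>i j. C1 i j + C2 i j + X i j)" using Ct by (intro ext) simp
      thus ?thesis using netf_add3[of "{1..d}" C1 C2 X m] by simp
    qed
    show "x m = netf {1..d} (Ctot e c) m + cc m"
    proof (cases "m \<le> e")
      case True
      have r1: "netf {1..d} C1 m = netf {0<..e} C1 m"
        by (rule netf_restrict) (use ed C1s' in auto)
      have r2: "netf {1..d} C2 m = 0"
        by (rule netf_zero) (use True C2s in \<open>fastforce+\<close>)
      have r3: "netf {1..d} X m = - (3/2) * (real d - real e)"
      proof -
        have "(\<Sum>j\<in>{1..d}. X m j) = 0" using True by (simp add: X_def)
        moreover have "(\<Sum>i\<in>{1..d}. X i m) = (3/2) * real (card {i\<in>{1..d}. e < i})"
          using True sum_if_const[where d=d and P="\<lambda>i. e < i" and c="3/2"] by (simp add: X_def)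
        moreover have "{i\<in>{1..d}. e < i} = {e<..d}" by auto
        ultimately show ?thesis using ed by (simp add: netf_def of_nat_diff)
      qed
      have "m \<in> {0<..0+e}" using m True by simp
      hence "y1 m = netf {0<..0+e} C1 m + cc1 m" using B1(4) by blast
      thus ?thesis using nt r1 r2 r3 True unfolding y1_def cc_def by simp
    next
      case False
      have r1: "netf {1..d} C1 m = 0"
        by (rule netf_zero) (use False C1s in \<open>fastforce+\<close>)
      have r2: "netf {1..d} C2 m = netf {e<..d} C2 m"
        by (rule netf_restrict) (use C2s' in auto)
      have r3: "netf {1..d} X m = (3/2) * real e"
      proof -
        have "(\<Sum>i\<in>{1..d}. X i m) = 0" using False by (simp add: X_def)
        moreover have "(\<Sum>j\<in>{1..d}. X m j) = (3/2) * real (card {j\<in>{1..d}. j \<le> e})"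
          using False sum_if_const[where d=d and P="\<lambda>j. j \<le> e" and c="3/2"] by (simp add: X_def)
        moreover have "{j\<in>{1..d}. j \<le> e} = {1..e}" using ed by auto
        ultimately show ?thesis by (simp add: netf_def)
      qed
      have "m \<in> {e<..e+(d-e)}" using m False ed' by simp
      hence "y2 m = netf {e<..e+(d-e)} C2 m + cc2 m" using B2(4) by blast
      thus ?thesis using nt r1 r2 r3 False ed' unfolding y2_def cc_def by simp
    qed
  qed
  have "e_decomp a d x e"
    unfolding e_decomp_def
  proof (intro exI[of _ c] exI[of _ cc] conjI)
    show "\<forall>i j. 0 \<le> c i j \<and> c i j \<le> 3/2" by (rule cb)
    show "\<forall>i. 1 \<le> i \<longrightarrow> i \<le> e \<longrightarrow> -(real a + 2)/2 \<le> cc i \<and> cc i \<le> - real a / 2"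
      using B1(3) by (simp add: cc_def)
    show "\<forall>i. e < i \<longrightarrow> i \<le> d \<longrightarrow> - real a / 2 < cc i \<and> cc i \<le> real a / 2"
      using B2(3) ed' by (simp add: cc_def)
    show "\<forall>m\<in>{1..d}. x m =
          (\<Sum>i\<in>{1..d}. \<Sum>j\<in>{1..d}.
              if j < i \<and> i \<le> e then c i j * (beta i m - beta j m) else 0)
        + (\<Sum>i\<in>{1..d}. \<Sum>j\<in>{1..d}.
              if e < j \<and> j < i then c i j * (beta i m - beta j m) else 0)
        + (\<Sum>i\<in>{1..d}. \<Sum>j\<in>{1..d}.
              if j \<le> e \<and> e < i then (3/2) * (beta i m - beta j m) else 0)
        + (\<Sum>i\<in>{1..d}. cc i * beta i m)"
      using eq three_sums by simp
  qed
  thus ?thesis using ed by blast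
qed



lemma rho_formula:
  assumes m: "m \<in> {1..d}"
  shows "rho d m = (real m - 1 - (real d - real m)) / 2"
proof -
  define K where "K = (\<lambda>i j::nat. if j < i then (1::real) else 0)"
  have "(\<Sum>i\<in>{1..d}. \<Sum>j\<in>{1..d}. if j < i then beta i m - beta j m else 0)
      = (\<Sum>i\<in>{1..d}. \<Sum>j\<in>{1..d}. K i j * (beta i m - beta j m))"
    by (intro sum.cong refl) (simp add: K_def)
  also have "\<dots> = (\<Sum>j\<in>{1..d}. K m j) - (\<Sum>i\<in>{1..d}. K i m)"
    using net_expand[of "{1..d}" m K] m by simp
  also have "(\<Sum>j\<in>{1..d}. K m j) = real (card {j\<in>{1..d}. j < m})"
    unfolding K_def using sum_if_const[where d=d and P="\<lambda>j. j < m" and c=1] by simp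
  also have "(\<Sum>i\<in>{1..d}. K i m) = real (card {i\<in>{1..d}. m < i})"
    unfolding K_def using sum_if_const[where d=d and P="\<lambda>i. m < i" and c=1] by simp
  also have "{j\<in>{1..d}. j < m} = {1..<m}" using m by auto
  also have "{i\<in>{1..d}. m < i} = {m<..d}" using m by auto
  finally have "(\<Sum>i\<in>{1..d}. \<Sum>j\<in>{1..d}. if j < i then beta i m - beta j m else 0)
      = real (m - 1) - real (d - m)" by simp
  moreover have "real (m - 1) = real m - 1" "real (d - m) = real d - real m" using m by (auto simp: of_nat_diff)
  ultimately show ?thesis unfolding rho_def by simp
qed

lemma shifted_mono:
  assumes "dominant_weight d psi" "1 \<le> i" "i \<le> j" "j \<le> d"
  shows "shifted d mu psi i \<le> shifted d mu psi j"
proof -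
  have "psi i \<le> psi j" using assms unfolding dominant_weight_def dominant_def by blast
  moreover have "rho d i \<le> rho d j" using assms rho_formula[of i d] rho_formula[of j d] by simp
  ultimately show ?thesis by (simp add: shifted_def delta_def)
qed

lemma e_facts:
  assumes "dominant_weight d psi" "shifted d mu psi \<in> Vzon a d"
  shows "e_of a d mu psi \<le> d" "\<exists>C cc. flowform a d (shifted d mu psi) (e_of a d mu psi) C cc"
proof -
  obtain e where e: "e \<le> d" "e_decomp a d (shifted d mu psi) e"
    using exists_e[of d "shifted d mu psi" a] shifted_mono[OF assms(1)] vzon_FF[OF assms(2)] by blast
  have "e_of a d mu psi = e" using e_of_eq[OF e] .
  thus "e_of a d mu psi \<le> d" "\<exists>C cc. flowform a d (shifted d mu psi) (e_of a d mu psi) C cc"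
    using e e_decomp_flow by auto
qed

lemma FF_cong:
  assumes "FF a d x1" "\<forall>m\<in>{1..d}. x1 m = x2 m"
  shows "FF a d x2"
  using assms unfolding FF_def by metis

lemma mset_count_repr:
  fixes f :: "'a \<Rightarrow> real"
  assumes "finite A" "set_mset M \<subseteq> A"
  shows "sum_mset (image_mset f M) = (\<Sum>x\<in>A. real (count M x) * f x)"
  using assms(2)
proof (induction M)
  case empty thus ?case by simp
next
  case (add b M)
  hence bA: "b \<in> A" and MA: "set_mset M \<subseteq> A" by auto
  have "(\<Sum>x\<in>A. real (count (add_mset b M) x) * f x) = (\<Sum>x\<in>A. real (count M x) * f x + (if x = b then f x else 0))"
    by (intro sum.cong refl) (auto simp: algebra_simps)
  also have "\<dots> = (\<Sum>x\<in>A. real (count M x) * f x) + f b" using assms(1) bA by (simp add: sum.distrib)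
  finally show ?case using add.IH[OF MA] by simp
qed

lemma mset_exch:
  fixes I :: "(nat \<Rightarrow> real) multiset"
  shows "(\<Sum>m\<in>S. sum_mset (image_mset (\<lambda>b. b m) I)) = sum_mset (image_mset (\<lambda>b. \<Sum>m\<in>S. b m) I)"
  by (induction I) (simp_all add: sum.distrib)

lemma flow_LB:
  assumes Db: "\<forall>i j. -(3/2) \<le> D i j \<and> D i j \<le> 3/2" and Ds: "\<forall>i j. D i j \<noteq> 0 \<longrightarrow> j < i"
    and y: "\<forall>m\<in>{1..d}. y m = netf {1..d} D m + g m" and S: "S \<subseteq> {1..d}"
  shows "(\<Sum>m\<in>S. y m) \<ge> -(3/2) * real (card S) * (real d - real (card S)) + (\<Sum>m\<in>S. g m)"
proof -
  have fS: "finite S" using S finite_subset by blast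
  have cS: "card S \<le> d" using card_mono[OF _ S] by simp
  have cD: "real (card ({1..d} - S)) = real d - real (card S)"
    using S fS cS by (simp add: card_Diff_subset of_nat_diff)
  have ys: "(\<Sum>m\<in>S. y m) = (\<Sum>m\<in>S. netf {1..d} D m) + (\<Sum>m\<in>S. g m)"
    using y S by (simp add: sum.distrib[symmetric] subset_iff)
  have "(\<Sum>m\<in>S. netf {1..d} D m) = (\<Sum>m\<in>S. \<Sum>t\<in>{1..d}-S. D m t - D t m)"
    using netf_subset_sum[of "{1..d}" S D] S by (simp add: sum_subtractf)
  also have "\<dots> \<ge> (\<Sum>m\<in>S. \<Sum>t\<in>{1..d}-S. -(3/2))"
  proof (intro sum_mono)
    fix m t
    have b: "-(3/2) \<le> D m t" "D m t \<le> 3/2" "-(3/2) \<le> D t m" "D t m \<le> 3/2" using Db by auto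
    show "-(3/2) \<le> D m t - D t m"
    proof (cases "t < m")
      case True
      hence "D t m = 0" using Ds by (metis less_asym)
      thus ?thesis using b by simp
    next
      case False
      hence "D m t = 0" using Ds by blast
      thus ?thesis using b by simp
    qed
  qed
  also have "(\<Sum>m\<in>S. \<Sum>t\<in>{1..d}-S. -(3/2::real)) = -(3/2) * real (card S) * (real d - real (card S))"
    using cD by simp
  finally have "(\<Sum>m\<in>S. netf {1..d} D m) \<ge> -(3/2) * real (card S) * (real d - real (card S))" .
  thus ?thesis using ys by simp
qed



definition vv :: "nat \<Rightarrow> nat \<Rightarrow> nat \<Rightarrow> real" where "vv i j = (\<lambda>m. beta i m - beta j m)"
definition ww :: "nat \<Rightarrow> nat \<Rightarrow> real" where "ww j = (\<lambda>m. - beta j m)"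

lemma W_ms_alt: "W_ms a d E = (\<Sum>j\<in>{1..E}. \<Sum>i\<in>{E<..d}. replicate_mset 3 (vv i j)) + (\<Sum>j\<in>{1..E}. replicate_mset a (ww j))"
proof -
  have "{E+1..d} = {E<..d}" by auto
  thus ?thesis by (simp add: W_ms_def vv_def ww_def)
qed

lemma vv_inj:
  assumes "vv i j = vv i' j'" "j < i" "j' < i'"
  shows "i = i' \<and> j = j'"
proof -
  have a: "vv i j i = vv i' j' i" "vv i j j = vv i' j' j" using assms by auto
  have "vv i j i = 1" "vv i j j = -1" using assms(2) by (auto simp: vv_def beta_def)
  hence a1: "vv i' j' i = 1" and a2: "vv i' j' j = -1" using a by auto
  show ?thesis using a1 a2 by (auto simp: vv_def beta_def split: if_splits)
qed

lemma vv_ne_ww: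
  assumes "j < i"
  shows "vv i j \<noteq> ww j'"
proof
  assume "vv i j = ww j'"
  hence "vv i j i = ww j' i" by simp
  thus False using assms by (auto simp: vv_def ww_def beta_def split: if_splits)
qed

lemma ww_inj: "ww j = ww j' \<Longrightarrow> j = j'"
proof -
  assume "ww j = ww j'"
  hence "ww j j = ww j' j" by simp
  thus "j = j'" by (auto simp: ww_def beta_def split: if_splits)
qed

lemma count_W_vv:
  assumes "i \<in> {E<..d}" "j \<in> {1..E}"
  shows "count (W_ms a d E) (vv i j) = 3"
proof -
  have "count (W_ms a d E) (vv i j) = (\<Sum>j'\<in>{1..E}. \<Sum>i'\<in>{E<..d}. if vv i j = vv i' j' then 3 else 0)
        + (\<Sum>j'\<in>{1..E}. if vv i j = ww j' then a else 0)"
    by (simp add: W_ms_alt count_sum)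
  also have "(\<Sum>j'\<in>{1..E}. if vv i j = ww j' then a else 0) = 0"
    using vv_ne_ww[of j i] assms by simp
  also have "(\<Sum>j'\<in>{1..E}. \<Sum>i'\<in>{E<..d}. if vv i j = vv i' j' then 3 else (0::nat))
      = (\<Sum>j'\<in>{1..E}. \<Sum>i'\<in>{E<..d}. if i' = i \<and> j' = j then 3 else (0::nat))"
  proof (intro sum.cong refl)
    fix j' i' assume "j' \<in> {1..E}" "i' \<in> {E<..d}"
    hence "j' < i'" by auto
    moreover have "j < i" using assms by auto
    ultimately show "(if vv i j = vv i' j' then 3 else 0) = (if i' = i \<and> j' = j then 3 else (0::nat))"
      using vv_inj[of i j i' j'] by auto
  qed
  also have "\<dots> = 3"
  proof -
    have "\<And>j'. (\<Sum>i'\<in>{E<..d}. if i' = i \<and> j' = j then 3 else (0::nat)) = (if j' = j then 3 else 0)"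
      using assms by (auto simp: sum.delta)
    hence "(\<Sum>j'\<in>{1..E}. \<Sum>i'\<in>{E<..d}. if i' = i \<and> j' = j then 3 else (0::nat)) = (\<Sum>j'\<in>{1..E}. if j' = j then 3 else 0)"
      by simp
    also have "\<dots> = 3" using assms by (simp add: sum.delta)
    finally show ?thesis .
  qed
  finally show ?thesis by simp
qed

lemma count_W_ww:
  assumes "j \<in> {1..E}"
  shows "count (W_ms a d E) (ww j) = a"
proof -
  have "count (W_ms a d E) (ww j) = (\<Sum>j'\<in>{1..E}. \<Sum>i'\<in>{E<..d}. if ww j = vv i' j' then 3 else 0)
        + (\<Sum>j'\<in>{1..E}. if ww j = ww j' then a else 0)"
    by (simp add: W_ms_alt count_sum)
  also have "(\<Sum>j'\<in>{1..E}. \<Sum>i'\<in>{E<..d}. if ww j = vv i' j' then 3 else (0::nat)) = 0"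
  proof (intro sum.neutral ballI)
    fix j' i' assume "j' \<in> {1..E}" "i' \<in> {E<..d}"
    hence "j' < i'" by auto
    thus "(if ww j = vv i' j' then 3 else (0::nat)) = 0" using vv_ne_ww[of j' i' j] by auto
  qed
  also have "(\<Sum>j'\<in>{1..E}. if ww j = ww j' then a else 0) = (\<Sum>j'\<in>{1..E}. if j' = j then a else 0)"
    by (intro sum.cong refl) (auto dest: ww_inj)
  also have "\<dots> = a" using assms by (simp add: sum.delta)
  finally show ?thesis by simp
qed

lemma set_W_sub:
  "set_mset (W_ms a d E) \<subseteq> (\<lambda>p. vv (fst p) (snd p)) ` ({E<..d} \<times> {1..E}) \<union> ww ` {1..E}"
proof
  fix x assume "x \<in># W_ms a d E"
  hence "(\<exists>j\<in>{1..E}. \<exists>i\<in>{E<..d}. x = vv i j) \<or> (\<exists>j\<in>{1..E}. x = ww j)"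
    by (auto simp: W_ms_alt set_mset_sum split: if_splits)
  thus "x \<in> (\<lambda>p. vv (fst p) (snd p)) ` ({E<..d} \<times> {1..E}) \<union> ww ` {1..E}"
  proof
    assume "\<exists>j\<in>{1..E}. \<exists>i\<in>{E<..d}. x = vv i j"
    then obtain i j where "j \<in> {1..E}" "i \<in> {E<..d}" "x = vv i j" by blast
    thus ?thesis by (intro UnI1 image_eqI[of _ _ "(i,j)"]) auto
  qed auto
qed

lemma W_repr:
  fixes f :: "(nat \<Rightarrow> real) \<Rightarrow> real"
  assumes "I \<subseteq># W_ms a d E"
  shows "sum_mset (image_mset f I) = (\<Sum>i\<in>{E<..d}. \<Sum>j\<in>{1..E}. real (count I (vv i j)) * f (vv i j))
      + (\<Sum>j\<in>{1..E}. real (count I (ww j)) * f (ww j))"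
proof -
  define Vs where "Vs = (\<lambda>p. vv (fst p) (snd p)) ` ({E<..d} \<times> {1..E})"
  define Ws where "Ws = ww ` {1..E}"
  have sub: "set_mset I \<subseteq> Vs \<union> Ws"
    using set_mset_mono[OF assms] set_W_sub[of a d E] unfolding Vs_def Ws_def by blast
  have fin: "finite (Vs \<union> Ws)" unfolding Vs_def Ws_def by simp
  have disj: "Vs \<inter> Ws = {}" unfolding Vs_def Ws_def using vv_ne_ww by fastforce
  let ?c = "\<lambda>x. real (count I x) * f x"
  have "sum_mset (image_mset f I) = (\<Sum>x\<in>Vs \<union> Ws. ?c x)" using mset_count_repr[OF fin sub] .
  also have "\<dots> = (\<Sum>x\<in>Vs. ?c x) + (\<Sum>x\<in>Ws. ?c x)" using disj unfolding Vs_def Ws_def by (simp add: sum.union_disjoint)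
  also have "(\<Sum>x\<in>Vs. ?c x) = (\<Sum>p\<in>{E<..d} \<times> {1..E}. ?c (vv (fst p) (snd p)))"
    unfolding Vs_def
  proof (rule sum.reindex[unfolded comp_def])
    show "inj_on (\<lambda>p. vv (fst p) (snd p)) ({E<..d} \<times> {1..E})"
    proof (rule inj_onI)
      fix p q assume "p \<in> {E<..d} \<times> {1..E}" "q \<in> {E<..d} \<times> {1..E}" "vv (fst p) (snd p) = vv (fst q) (snd q)"
      thus "p = q" using vv_inj[of "fst p" "snd p" "fst q" "snd q"] by (auto simp: prod_eq_iff)
    qed
  qed
  also have "\<dots> = (\<Sum>i\<in>{E<..d}. \<Sum>j\<in>{1..E}. ?c (vv i j))" by (simp add: sum.cartesian_product case_prod_beta)
  also have "(\<Sum>x\<in>Ws. ?c x) = (\<Sum>j\<in>{1..E}. ?c (ww j))"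
    unfolding Ws_def by (rule sum.reindex[unfolded comp_def]) (auto intro: inj_onI ww_inj)
  finally show ?thesis .
qed



lemma dsum_restrict:
  fixes F :: "nat \<Rightarrow> nat \<Rightarrow> real"
  assumes "finite D" "P \<subseteq> D" "Q \<subseteq> D"
  shows "(\<Sum>i\<in>D. \<Sum>j\<in>D. if i \<in> P \<and> j \<in> Q then F i j else 0) = (\<Sum>i\<in>P. \<Sum>j\<in>Q. F i j)"
proof -
  have "\<And>i. (\<Sum>j\<in>D. if i \<in> P \<and> j \<in> Q then F i j else 0) = (if i \<in> P then (\<Sum>j\<in>Q. F i j) else 0)"
  proof -
    fix i
    have "(\<Sum>j\<in>D. if j \<in> Q then F i j else 0) = (\<Sum>j\<in>D \<inter> Q. F i j)"
      using sum.inter_restrict[OF assms(1), of "F i" Q] by simp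
    also have "D \<inter> Q = Q" using assms by auto
    finally show "(\<Sum>j\<in>D. if i \<in> P \<and> j \<in> Q then F i j else 0) = (if i \<in> P then (\<Sum>j\<in>Q. F i j) else 0)"
      by (cases "i \<in> P") auto
  qed
  hence "(\<Sum>i\<in>D. \<Sum>j\<in>D. if i \<in> P \<and> j \<in> Q then F i j else 0) = (\<Sum>i\<in>D. if i \<in> P then (\<Sum>j\<in>Q. F i j) else 0)"
    by simp
  also have "\<dots> = (\<Sum>i\<in>D \<inter> P. \<Sum>j\<in>Q. F i j)"
    using sum.inter_restrict[OF assms(1), of "\<lambda>i. \<Sum>j\<in>Q. F i j" P] by simp
  also have "D \<inter> P = P" using assms by auto
  finally show ?thesis .
qed

theorem proposition3p8:
  fixes a d :: nat and mu :: real
    and chi chi' psi :: "nat \<Rightarrow> real"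
    and I :: "(nat \<Rightarrow> real) multiset"
  assumes chi_dom: "dominant_weight d chi"
    and chi'_dom: "dominant_weight d chi'"
    and chi_V: "shifted d mu chi \<in> Vzon a d"
    and chi'_V: "shifted d mu chi' \<in> Vzon a d"
    and I_sub: "I \<subseteq># W_ms a d (e_of a d mu chi')"
    and distinct: "inj_on (\<lambda>m. chi' m - sigma_ms I m + rho d m) {1..d}"
    and psi_dom: "dominant_weight d psi"
    and psi_perm: "\<exists>w. bij_betw w {1..d} {1..d} \<and>
        (\<forall>m\<in>{1..d}. psi m + rho d m = chi' (w m) - sigma_ms I (w m) + rho d (w m))"
    and cases: "p_of a d mu chi' > p_of a d mu chi
      \<or> (p_of a d mu chi' = p_of a d mu chi \<and> e_of a d mu chi' < e_of a d mu chi)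
      \<or> (p_of a d mu chi' = p_of a d mu chi \<and> e_of a d mu chi' = e_of a d mu chi \<and> I \<noteq> {#})"
  shows "shifted d mu psi \<in> Vzon a d
    \<and> p_l a d mu (e_of a d mu chi) psi \<ge> p_of a d mu psi
    \<and> p_of a d mu psi \<ge> p_of a d mu chi
    \<and> (p_of a d mu psi = p_of a d mu chi \<longrightarrow>
          p_of a d mu chi' = p_of a d mu chi
        \<and> e_of a d mu psi \<le> e_of a d mu chi'
        \<and> (I \<noteq> {#} \<longrightarrow> e_of a d mu psi < e_of a d mu chi')
        \<and> e_of a d mu psi < e_of a d mu chi
        \<and> p_l a d mu (e_of a d mu chi) psi > p_of a d mu psi)
    \<and> (\<Sum>i\<in>{1..e_of a d mu chi}. psi i) > (\<Sum>i\<in>{1..e_of a d mu chi}. chi i)"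
proof -
  define x where "x = shifted d mu chi"
  define x' where "x' = shifted d mu chi'"
  define xp where "xp = shifted d mu psi"
  define e where "e = e_of a d mu chi"
  define E where "E = e_of a d mu chi'"
  define DD where "DD = {1..d}"
  define P where "P = {E<..d}"
  define Q where "Q = {1..E}"
  have ed: "e \<le> d" using e_facts(1)[OF chi_dom chi_V] unfolding e_def .
  have Ed: "E \<le> d" using e_facts(1)[OF chi'_dom chi'_V] unfolding E_def .
  obtain C' cc' where ff': "flowform a d x' E C' cc'"
    using e_facts(2)[OF chi'_dom chi'_V] unfolding x'_def E_def by blast
  have pchi: "p_of a d mu chi = plx a d x e" by (simp add: p_of_def p_l_plx x_def e_def)
  have pchi': "p_of a d mu chi' = plx a d x' E" by (simp add: p_of_def p_l_plx x'_def E_def)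
  have pE: "plx a d x' E = (\<Sum>m\<in>{1..E}. cc' m + real a / 2)" using flow_prefix(2)[OF ff' Ed] by simp
  have p'ge: "plx a d x' E \<ge> plx a d x e" using cases pchi pchi' by auto
  obtain w where w: "bij_betw w {1..d} {1..d}"
      "\<forall>m\<in>{1..d}. psi m + rho d m = chi' (w m) - sigma_ms I (w m) + rho d (w m)"
    using psi_perm by blast
  have C'b: "\<forall>i j. 0 \<le> C' i j \<and> C' i j \<le> 3/2" and C's: "\<forall>i j. C' i j \<noteq> 0 \<longrightarrow> j < i"
    and C'x: "\<forall>i j. j \<le> E \<longrightarrow> E < i \<longrightarrow> C' i j = 3/2"
    and c1: "\<forall>i. 1 \<le> i \<longrightarrow> i \<le> E \<longrightarrow> -(real a + 2)/2 \<le> cc' i \<and> cc' i \<le> - real a / 2"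
    and c2: "\<forall>i. E < i \<longrightarrow> i \<le> d \<longrightarrow> - real a / 2 < cc' i \<and> cc' i \<le> real a / 2"
    and x'e: "\<forall>m\<in>{1..d}. x' m = netf {1..d} C' m + cc' m"
    using ff' unfolding flowform_def by auto
  have Isub: "I \<subseteq># W_ms a d E" using I_sub unfolding E_def .
  define k where "k = (\<lambda>i j. real (count I (vv i j)))"
  define kk where "kk = (\<lambda>j. real (count I (ww j)))"
  have kb: "\<And>i j. i \<in> P \<Longrightarrow> j \<in> Q \<Longrightarrow> 0 \<le> k i j \<and> k i j \<le> 3"
  proof -
    fix i j assume "i \<in> P" "j \<in> Q"
    hence "i \<in> {E<..d}" "j \<in> {1..E}" unfolding P_def Q_def by auto
    hence "count (W_ms a d E) (vv i j) = 3" by (rule count_W_vv)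
    moreover have "count I (vv i j) \<le> count (W_ms a d E) (vv i j)"
      using Isub by (rule mset_subset_eq_count)
    ultimately show "0 \<le> k i j \<and> k i j \<le> 3" unfolding k_def by simp
  qed
  have kkb: "\<And>j. j \<in> Q \<Longrightarrow> 0 \<le> kk j \<and> kk j \<le> real a"
  proof -
    fix j assume "j \<in> Q"
    hence "j \<in> {1..E}" unfolding Q_def by auto
    hence "count (W_ms a d E) (ww j) = a" by (rule count_W_ww)
    moreover have "count I (ww j) \<le> count (W_ms a d E) (ww j)"
      using Isub by (rule mset_subset_eq_count)
    ultimately show "0 \<le> kk j \<and> kk j \<le> real a" unfolding kk_def by simp
  qed
  define K where "K = (\<lambda>i j. if i \<in> P \<and> j \<in> Q then k i j else 0)"
  define kq where "kq = (\<lambda>m. if m \<in> Q then kk m else 0)"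
  have PD: "P \<subseteq> {1..d}" and QD: "Q \<subseteq> {1..d}" using Ed unfolding P_def Q_def by auto
  have sig: "\<And>m. m \<in> {1..d} \<Longrightarrow> sigma_ms I m = netf {1..d} K m - kq m"
  proof -
    fix m assume m: "m \<in> {1..d}"
    have "sigma_ms I m = (\<Sum>i\<in>P. \<Sum>j\<in>Q. k i j * (beta i m - beta j m)) + (\<Sum>j\<in>Q. kk j * (- beta j m))"
      using W_repr[OF Isub, of "\<lambda>b. b m"] unfolding sigma_ms_def k_def kk_def P_def Q_def
      by (simp add: vv_def ww_def)
    also have "(\<Sum>i\<in>P. \<Sum>j\<in>Q. k i j * (beta i m - beta j m)) = (\<Sum>i\<in>{1..d}. \<Sum>j\<in>{1..d}. K i j * (beta i m - beta j m))"
    proof -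
      have "(\<Sum>i\<in>{1..d}. \<Sum>j\<in>{1..d}. K i j * (beta i m - beta j m))
          = (\<Sum>i\<in>{1..d}. \<Sum>j\<in>{1..d}. if i \<in> P \<and> j \<in> Q then k i j * (beta i m - beta j m) else 0)"
        by (intro sum.cong refl) (simp add: K_def)
      also have "\<dots> = (\<Sum>i\<in>P. \<Sum>j\<in>Q. k i j * (beta i m - beta j m))"
        by (rule dsum_restrict[OF _ PD QD]) simp
      finally show ?thesis by simp
    qed
    also have "\<dots> = netf {1..d} K m" using net_expand[of "{1..d}" m K] m by (simp add: netf_def)
    also have "(\<Sum>j\<in>Q. kk j * (- beta j m)) = - kq m"
    proof -
      have "(\<Sum>j\<in>Q. kk j * (- beta j m)) = - (\<Sum>j\<in>Q. if m = j then kk j else 0)"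
        by (simp add: beta_simp sum_negf[symmetric] if_distrib cong: if_cong)
      moreover have "(\<Sum>j\<in>Q. if m = j then kk j else 0) = kq m"
        unfolding kq_def Q_def by (rule sum.delta') simp
      ultimately show ?thesis by simp
    qed
    finally show "sigma_ms I m = netf {1..d} K m - kq m" by simp
  qed
  define D' where "D' = (\<lambda>i j. C' i j - K i j)"
  define g where "g = (\<lambda>m. if m \<in> {1..d} then cc' m + kq m else 0)"
  define y where "y = (\<lambda>m. x' m - sigma_ms I m)"
  have D'b: "\<forall>i j. -(3/2) \<le> D' i j \<and> D' i j \<le> 3/2"
  proof (intro allI)
    fix i j
    show "-(3/2) \<le> D' i j \<and> D' i j \<le> 3/2"
    proof (cases "i \<in> P \<and> j \<in> Q")
      case True
      hence "C' i j = 3/2" using C'x unfolding P_def Q_def by auto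
      thus ?thesis using kb[of i j] True unfolding D'_def K_def by simp
    next
      case False
      have "0 \<le> C' i j" "C' i j \<le> 3/2" using C'b by auto
      thus ?thesis using False unfolding D'_def K_def by auto
    qed
  qed
  have D's: "\<forall>i j. D' i j \<noteq> 0 \<longrightarrow> j < i"
  proof (intro allI impI)
    fix i j assume "D' i j \<noteq> 0"
    hence "C' i j \<noteq> 0 \<or> (i \<in> P \<and> j \<in> Q)" unfolding D'_def K_def by (auto split: if_splits)
    thus "j < i" using C's unfolding P_def Q_def by auto
  qed
  have gb: "\<forall>m. -(real a + 2)/2 \<le> g m \<and> g m \<le> real a / 2"
  proof
    fix m
    show "-(real a + 2)/2 \<le> g m \<and> g m \<le> real a / 2"
    proof (cases "m \<in> {1..d}")
      case False thus ?thesis by (auto simp: g_def)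
    next
      case True
      show ?thesis
      proof (cases "m \<le> E")
        case True2: True
        hence "m \<in> Q" using True Q_def by simp
        have "g m = cc' m + kk m" using True \<open>m \<in> Q\<close> by (simp add: g_def kq_def)
        moreover have "-(real a + 2)/2 \<le> cc' m" "cc' m \<le> - real a / 2" using c1 True True2 by auto
        ultimately show ?thesis using kkb[OF \<open>m \<in> Q\<close>] by simp
      next
        case False
        hence "m \<notin> Q" using Q_def by simp
        have "g m = cc' m" using True \<open>m \<notin> Q\<close> by (simp add: g_def kq_def)
        moreover have "- real a / 2 < cc' m" "cc' m \<le> real a / 2" using c2 True False by auto
        ultimately show ?thesis by simp
      qed
    qed
  qed
  have ye: "\<forall>m\<in>{1..d}. y m = netf {1..d} D' m + g m"
  proof
    fix m assume m: "m \<in> {1..d}"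
    have "netf {1..d} D' m = netf {1..d} C' m - netf {1..d} K m"
      by (simp add: netf_def D'_def sum_subtractf)
    thus "y m = netf {1..d} D' m + g m" using x'e m sig[OF m] by (simp add: y_def g_def)
  qed
  have FFy: "FF a d y" using signed_FF[OF D'b D's gb ye] .
  have xpw: "\<forall>m\<in>{1..d}. xp m = y (w m)"
  proof
    fix m assume "m \<in> {1..d}"
    thus "xp m = y (w m)" using w(2) by (simp add: xp_def y_def x'_def shifted_def delta_def algebra_simps)
  qed
  have FFxp: "FF a d xp" using FF_cong[OF FF_perm[OF FFy w(1)]] xpw by simp
  have V: "shifted d mu psi \<in> Vzon a d" using FF_vzon[OF FFxp] unfolding xp_def .
  define e2 where "e2 = e_of a d mu psi"
  have e2d: "e2 \<le> d" using e_facts(1)[OF psi_dom V] unfolding e2_def .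
  obtain C2 cc2 where ff2: "flowform a d xp e2 C2 cc2"
    using e_facts(2)[OF psi_dom V] unfolding xp_def e2_def by blast
  have ppsi: "p_of a d mu psi = plx a d xp e2" by (simp add: p_of_def p_l_plx xp_def e2_def)
  have ppsie: "p_l a d mu e psi = plx a d xp e" by (simp add: p_l_plx xp_def)
  have inj_w: "inj_on w {1..d}" using w(1) bij_betw_def by blast
  have wsub: "\<And>l. l \<le> d \<Longrightarrow> w ` {1..l} \<subseteq> {1..d}" using w(1) bij_betwE by fastforce
  have wcard: "\<And>l. l \<le> d \<Longrightarrow> card (w ` {1..l}) = l"
  proof -
    fix l assume "l \<le> d"
    hence "inj_on w {1..l}" using inj_w by (rule_tac inj_on_subset) auto
    thus "card (w ` {1..l}) = l" by (simp add: card_image)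
  qed
  have xps: "\<And>l. l \<le> d \<Longrightarrow> (\<Sum>i\<in>{1..l}. xp i) = (\<Sum>m\<in>w ` {1..l}. y m)"
  proof -
    fix l assume ld: "l \<le> d"
    hence "inj_on w {1..l}" using inj_w by (rule_tac inj_on_subset) auto
    hence "(\<Sum>m\<in>w ` {1..l}. y m) = (\<Sum>i\<in>{1..l}. y (w i))" by (simp add: sum.reindex)
    also have "\<dots> = (\<Sum>i\<in>{1..l}. xp i)" using xpw ld by (intro sum.cong refl) auto
    finally show "(\<Sum>i\<in>{1..l}. xp i) = (\<Sum>m\<in>w ` {1..l}. y m)" by simp
  qed
  define h where "h = (\<lambda>m. cc' m + real a / 2)"
  have LB: "\<And>l. l \<le> d \<Longrightarrow> plx a d xp l \<ge> plx a d x' E \<and> (plx a d xp l = plx a d x' E \<longrightarrow> w ` {1..l} \<subseteq> Q)"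
  proof -
    fix l assume ld: "l \<le> d"
    define S where "S = w ` {1..l}"
    have SD: "S \<subseteq> {1..d}" and cS: "card S = l" using wsub[OF ld] wcard[OF ld] unfolding S_def by auto
    have fS: "finite S" using SD finite_subset by blast
    have l1: "(\<Sum>m\<in>S. y m) \<ge> -(3/2) * real l * (real d - real l) + (\<Sum>m\<in>S. g m)"
      using flow_LB[OF D'b D's ye SD] cS by simp
    have l2: "(\<Sum>m\<in>S. g m) \<ge> (\<Sum>m\<in>S. cc' m)"
    proof (intro sum_mono)
      fix m assume "m \<in> S"
      hence "m \<in> {1..d}" using SD by auto
      moreover have "kq m \<ge> 0" using kkb by (simp add: kq_def)
      ultimately show "cc' m \<le> g m" by (simp add: g_def)
    qed
    have pl: "plx a d xp l = (\<Sum>m\<in>S. y m) + (3/2) * real l * (real d - real l) + (real a / 2) * real l"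
      unfolding plx_def using xps[OF ld] S_def by simp
    have hS: "(\<Sum>m\<in>S. h m) = (\<Sum>m\<in>S. cc' m) + (real a / 2) * real l"
      unfolding h_def using cS by (simp add: sum.distrib mult.commute)
    have pl2: "plx a d xp l \<ge> (\<Sum>m\<in>S. h m)" using pl l1 l2 hS by linarith
    have fQ: "finite Q" by (simp add: Q_def)
    have sp1: "(\<Sum>m\<in>S. h m) = (\<Sum>m\<in>S \<inter> Q. h m) + (\<Sum>m\<in>S - Q. h m)"
      using fS by (metis sum.Int_Diff)
    have sp2: "(\<Sum>m\<in>Q. h m) = (\<Sum>m\<in>S \<inter> Q. h m) + (\<Sum>m\<in>Q - S. h m)"
      using fQ by (metis inf.commute sum.Int_Diff)
    have n1: "(\<Sum>m\<in>Q - S. h m) \<le> 0"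
    proof (intro sum_nonpos)
      fix m assume "m \<in> Q - S"
      hence "1 \<le> m" "m \<le> E" by (auto simp: Q_def)
      thus "h m \<le> 0" using c1 by (auto simp: h_def)
    qed
    have hpos: "\<And>m. m \<in> S - Q \<Longrightarrow> h m > 0"
    proof -
      fix m assume "m \<in> S - Q"
      hence "E < m" "m \<le> d" using SD by (auto simp: Q_def)
      thus "h m > 0" using c2 by (auto simp: h_def)
    qed
    have n2: "(\<Sum>m\<in>S - Q. h m) \<ge> 0" using hpos by (intro sum_nonneg) (auto intro: less_imp_le)
    have pEQ: "plx a d x' E = (\<Sum>m\<in>Q. h m)" using pE by (simp add: h_def Q_def)
    show "plx a d xp l \<ge> plx a d x' E \<and> (plx a d xp l = plx a d x' E \<longrightarrow> w ` {1..l} \<subseteq> Q)"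
    proof (intro conjI impI)
      show "plx a d xp l \<ge> plx a d x' E" using pl2 sp1 sp2 n1 n2 pEQ by linarith
      assume eq: "plx a d xp l = plx a d x' E"
      show "w ` {1..l} \<subseteq> Q"
      proof (rule ccontr)
        assume "\<not> w ` {1..l} \<subseteq> Q"
        hence ne: "S - Q \<noteq> {}" unfolding S_def by auto
        have "(\<Sum>m\<in>S - Q. h m) > 0" using fS ne hpos by (intro sum_pos) auto
        thus False using eq pl2 sp1 sp2 n1 pEQ by linarith
      qed
    qed
  qed
  have LBs: "I \<noteq> {#} \<Longrightarrow> w ` {1..E} = Q \<Longrightarrow> plx a d xp E > plx a d x' E"
  proof -
    assume In: "I \<noteq> {#}" and SQ: "w ` {1..E} = Q"
    have DQ: "{1..d} - Q = P" using Ed unfolding P_def Q_def by auto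
    have ys: "(\<Sum>m\<in>Q. y m) = (\<Sum>m\<in>Q. netf {1..d} D' m) + (\<Sum>m\<in>Q. g m)"
      using ye QD by (simp add: sum.distrib[symmetric] subset_iff)
    have nQ: "(\<Sum>m\<in>Q. netf {1..d} D' m) = (\<Sum>m\<in>Q. \<Sum>t\<in>P. D' m t) - (\<Sum>m\<in>Q. \<Sum>t\<in>P. D' t m)"
      using netf_subset_sum[of "{1..d}" Q D'] QD DQ by simp
    have z1: "(\<Sum>m\<in>Q. \<Sum>t\<in>P. D' m t) = 0"
    proof (intro sum.neutral ballI)
      fix m t assume "m \<in> Q" "t \<in> P"
      hence "\<not> t < m" unfolding P_def Q_def by auto
      thus "D' m t = 0" using D's by blast
    qed
    have z2: "(\<Sum>m\<in>Q. \<Sum>t\<in>P. D' t m) = (\<Sum>m\<in>Q. \<Sum>t\<in>P. 3/2 - k t m)"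
    proof (intro sum.cong refl)
      fix m t assume "m \<in> Q" "t \<in> P"
      moreover hence "C' t m = 3/2" using C'x unfolding P_def Q_def by auto
      ultimately show "D' t m = 3/2 - k t m" unfolding D'_def K_def by simp
    qed
    have cP: "card P = d - E" by (simp add: P_def)
    have cQ: "card Q = E" by (simp add: Q_def)
    have z3: "(\<Sum>m\<in>Q. \<Sum>t\<in>P. 3/2 - k t m) = (3/2) * real E * (real d - real E) - (\<Sum>m\<in>Q. \<Sum>t\<in>P. k t m)"
      using cP cQ Ed by (simp add: sum_subtractf of_nat_diff)
    have gQ: "(\<Sum>m\<in>Q. g m) = (\<Sum>m\<in>Q. cc' m) + (\<Sum>m\<in>Q. kk m)"
      using QD by (simp add: g_def kq_def sum.distrib[symmetric] subset_iff)
    have size: "real (size I) = (\<Sum>m\<in>Q. \<Sum>t\<in>P. k t m) + (\<Sum>m\<in>Q. kk m)"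
    proof -
      have "sum_mset (image_mset (\<lambda>_. 1::real) I) = (\<Sum>i\<in>P. \<Sum>j\<in>Q. k i j) + (\<Sum>j\<in>Q. kk j)"
        using W_repr[OF Isub, of "\<lambda>_. 1"] unfolding k_def kk_def P_def Q_def by simp
      moreover have "(\<Sum>i\<in>P. \<Sum>j\<in>Q. k i j) = (\<Sum>m\<in>Q. \<Sum>t\<in>P. k t m)" by (rule sum.swap)
      ultimately show ?thesis by simp
    qed
    have "0 < size I" using In nonempty_has_size by blast
    hence spos: "real (size I) > 0" by simp
    have plE: "plx a d xp E = (\<Sum>m\<in>Q. y m) + (3/2) * real E * (real d - real E) + (real a / 2) * real E"
      unfolding plx_def using xps[OF Ed] SQ by simp
    have hQ: "(\<Sum>m\<in>Q. h m) = (\<Sum>m\<in>Q. cc' m) + (real a / 2) * real E"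
      unfolding h_def using cQ by (simp add: sum.distrib mult.commute)
    have pEQ: "plx a d x' E = (\<Sum>m\<in>Q. h m)" using pE by (simp add: h_def Q_def)
    show "plx a d xp E > plx a d x' E"
      using plE ys nQ z1 z2 z3 gQ size spos hQ pEQ by linarith
  qed
  have A1: "plx a d xp e \<ge> plx a d xp e2" using flow_argmin(1)[OF ff2 e2d ed] .
  have A2: "plx a d xp e2 \<ge> plx a d x' E" using LB[OF e2d] by simp
  have A3: "plx a d xp e2 \<ge> plx a d x e" using A2 p'ge by linarith
  have EQ: "plx a d xp e2 = plx a d x e \<Longrightarrow>
      plx a d x' E = plx a d x e \<and> e2 \<le> E \<and> (I \<noteq> {#} \<longrightarrow> e2 < E) \<and> e2 < e \<and> plx a d xp e > plx a d xp e2"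
  proof -
    assume eq: "plx a d xp e2 = plx a d x e"
    have q1: "plx a d x' E = plx a d x e" using eq A2 p'ge by linarith
    have eq2: "plx a d xp e2 = plx a d x' E" using eq q1 by simp
    have sub: "w ` {1..e2} \<subseteq> Q" using LB[OF e2d] eq2 by blast
    have q2: "e2 \<le> E"
    proof -
      have "card (w ` {1..e2}) \<le> card Q" using sub by (intro card_mono) (auto simp: Q_def)
      thus ?thesis using wcard[OF e2d] by (simp add: Q_def)
    qed
    have q3: "I \<noteq> {#} \<longrightarrow> e2 < E"
    proof
      assume In: "I \<noteq> {#}"
      show "e2 < E"
      proof (rule ccontr)
        assume "\<not> e2 < E"
        hence e2E: "e2 = E" using q2 by simp
        have "w ` {1..E} = Q"
          using sub e2E wcard[OF e2d] by (intro card_subset_eq) (auto simp: Q_def)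
        hence "plx a d xp E > plx a d x' E" using LBs In by blast
        thus False using eq2 e2E by simp
      qed
    qed
    have q4: "e2 < e"
    proof -
      have "\<not> p_of a d mu chi' > p_of a d mu chi" using q1 pchi pchi' by simp
      hence "(E < e) \<or> (E = e \<and> I \<noteq> {#})" using cases unfolding E_def e_def by auto
      thus ?thesis using q2 q3 by auto
    qed
    have q5: "plx a d xp e > plx a d xp e2" using flow_argmin(2)[OF ff2 e2d q4 ed] .
    show ?thesis using q1 q2 q3 q4 q5 by blast
  qed
  have S1: "plx a d xp e > plx a d x e"
  proof (cases "plx a d xp e2 = plx a d x e")
    case True thus ?thesis using EQ A1 by auto
  next
    case False thus ?thesis using A1 A3 by linarith
  qed
  have S2: "(\<Sum>i\<in>{1..e}. psi i) > (\<Sum>i\<in>{1..e}. chi i)"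
  proof -
    have "plx a d xp e - plx a d x e = (\<Sum>i\<in>{1..e}. psi i) - (\<Sum>i\<in>{1..e}. chi i)"
      by (simp add: plx_def xp_def x_def shifted_def sum.distrib sum_subtractf)
    thus ?thesis using S1 by linarith
  qed
  show ?thesis
    unfolding e_def[symmetric] E_def[symmetric] e2_def[symmetric]
    using V A1 A3 EQ S2 ppsi ppsie pchi pchi' by auto
qed


end
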